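(* Let $\alpha\in\mathbb{C}$ with $|\alpha|<1$ and $\phi(z)=\left(\dfrac{z-\alpha}{1-\overline\alpha z}\right)^3$. Then $$\omega_2(S(\phi))=\dfrac{7|\alpha|-|\alpha|^{3}+(1+|\alpha|^{2})(|\alpha|^{2}+8)^{\frac{1}{2}}}{4+2|\alpha|^{2}+2|\alpha|(|\alpha|^{2}+8)^{\frac{1}{2}}}.$$
   Context: $S(\phi)$ is the compression of the unilateral shift $Sf=zf$ on the Hardy space $\mathbb{H}^2$ of the unit disc to the model space $H(\phi)=\mathbb{H}^2\ominus\phi\mathbb{H}^2$: $S(\phi)f=P(zf)$, $P$ the orthogonal projection onto $H(\phi)$. $\omega_2$ is the numerical radius. *)

theory Defs
  imports "HOL-Analysis.Analysis"
begin

text \<open>The Hardy space H^2 of the unit disc, realised (isometrically) via Taylor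
coefficients: f(z) = sum a_n z^n with (a_n) square summable.\<close>

definition H2 :: "(nat \<Rightarrow> complex) set" where
  "H2 = {a. summable (\<lambda>n. (cmod (a n))^2)}"

definition h2_inner :: "(nat \<Rightarrow> complex) \<Rightarrow> (nat \<Rightarrow> complex) \<Rightarrow> complex" where
  "h2_inner a b = (\<Sum>n. a n * cnj (b n))"

definition h2_norm :: "(nat \<Rightarrow> complex) \<Rightarrow> real" where
  "h2_norm a = sqrt (\<Sum>n. (cmod (a n))^2)"

definition taylor_coeff :: "(complex \<Rightarrow> complex) \<Rightarrow> nat \<Rightarrow> complex" where
  "taylor_coeff f n = (deriv ^^ n) f 0 / of_nat (fact n)"

definition mult_by :: "(complex \<Rightarrow> complex) \<Rightarrow> (nat \<Rightarrow> complex) \<Rightarrow> (nat \<Rightarrow> complex)" where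
  "mult_by phi a = (\<lambda>n. \<Sum>k\<le>n. taylor_coeff phi k * a (n - k))"

definition model_space :: "(complex \<Rightarrow> complex) \<Rightarrow> (nat \<Rightarrow> complex) set" where
  "model_space phi = {f \<in> H2. \<forall>g\<in>H2. h2_inner f (mult_by phi g) = 0}"

definition shift :: "(nat \<Rightarrow> complex) \<Rightarrow> (nat \<Rightarrow> complex)" where
  "shift a = (\<lambda>n. case n of 0 \<Rightarrow> 0 | Suc m \<Rightarrow> a m)"

definition orth_proj :: "(nat \<Rightarrow> complex) set \<Rightarrow> (nat \<Rightarrow> complex) \<Rightarrow> (nat \<Rightarrow> complex)" where
  "orth_proj M a = (THE b. b \<in> M \<and> (\<forall>c\<in>M. h2_inner (\<lambda>n. a n - b n) c = 0))"

definition compressed_shift :: "(complex \<Rightarrow> complex) \<Rightarrow> (nat \<Rightarrow> complex) \<Rightarrow> (nat \<Rightarrow> complex)" where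
  "compressed_shift phi f = orth_proj (model_space phi) (shift f)"

definition numerical_radius ::
  "((nat \<Rightarrow> complex) \<Rightarrow> (nat \<Rightarrow> complex)) \<Rightarrow> (nat \<Rightarrow> complex) set \<Rightarrow> real" where
  "numerical_radius T M = Sup {cmod (h2_inner (T f) f) | f. f \<in> M \<and> h2_norm f = 1}"

end

theory Submission
  imports Defs "HOL-Complex_Analysis.Complex_Analysis"
begin

lemma H2_iff: "a \<in> H2 \<longleftrightarrow> summable (\<lambda>n. (cmod (a n))^2)"
  by (simp add: H2_def)

lemma H2_add [intro]:
  assumes "a \<in> H2" "b \<in> H2" shows "(\<lambda>n. a n + b n) \<in> H2"
proof -
  have "(cmod (a n + b n))^2 \<le> 2*(cmod (a n))^2 + 2*(cmod (b n))^2" for n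
  proof -
    have "cmod (a n + b n) \<le> cmod (a n) + cmod (b n)" by (rule norm_triangle_ineq)
    then have "(cmod (a n + b n))^2 \<le> (cmod (a n) + cmod (b n))^2"
      by (rule power_mono) simp
    moreover have "(cmod (a n) + cmod (b n))^2 + (cmod (a n) - cmod (b n))^2 = 2*(cmod (a n))^2 + 2*(cmod (b n))^2"
      by algebra
    moreover have "(cmod (a n) - cmod (b n))^2 \<ge> 0" by simp
    ultimately show ?thesis by linarith
  qed
  note bnd = this
  have sa: "summable (\<lambda>n. (cmod (a n))^2)" and sb: "summable (\<lambda>n. (cmod (b n))^2)"
    using assms unfolding H2_iff by auto
  have s: "summable (\<lambda>n. 2*(cmod (a n))^2 + 2*(cmod (b n))^2)"
    by (rule summable_add[OF summable_mult[OF sa] summable_mult[OF sb]])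
  have "summable (\<lambda>n. (cmod (a n + b n))^2)"
  proof (rule summable_comparison_test'[OF s, where N=0])
    fix n show "norm ((cmod (a n + b n))^2) \<le> 2*(cmod (a n))^2 + 2*(cmod (b n))^2"
      using bnd[of n] by simp
  qed
  then show ?thesis unfolding H2_iff .
qed

lemma H2_scale [intro]:
  assumes "a \<in> H2" shows "(\<lambda>n. k * a n) \<in> H2"
proof -
  have sa: "summable (\<lambda>n. (cmod (a n))^2)" using assms unfolding H2_iff by auto
  have "summable (\<lambda>n. (cmod k)^2 * (cmod (a n))^2)"
    by (rule summable_mult[OF sa])
  moreover have "(\<lambda>n. (cmod k)^2 * (cmod (a n))^2) = (\<lambda>n. (cmod (k * a n))^2)"
    by (simp add: norm_mult power_mult_distrib)
  ultimately show ?thesis unfolding H2_iff by simp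
qed

lemma H2_minus [intro]: "a \<in> H2 \<Longrightarrow> (\<lambda>n. - a n) \<in> H2"
proof -
  assume "a \<in> H2"
  then have "(\<lambda>n. (-1) * a n) \<in> H2" by (rule H2_scale)
  then show ?thesis by simp
qed

lemma H2_diff [intro]:
  assumes "a \<in> H2" "b \<in> H2" shows "(\<lambda>n. a n - b n) \<in> H2"
proof -
  have "(\<lambda>n. a n + - b n) \<in> H2" by (rule H2_add[OF assms(1) H2_minus[OF assms(2)]])
  then show ?thesis by simp
qed

lemma H2_zero [intro]: "(\<lambda>n. 0) \<in> H2" by (simp add: H2_iff)

lemma H2_summable_inner:
  assumes "a \<in> H2" "b \<in> H2" shows "summable (\<lambda>n. a n * cnj (b n))"
proof -
  have "norm (a n * cnj (b n)) \<le> ((cmod (a n))^2 + (cmod (b n))^2)/2" for n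
  proof -
    have "norm (a n * cnj (b n)) = cmod (a n) * cmod (b n)" by (simp add: norm_mult)
    also have "\<dots> \<le> ((cmod (a n))^2 + (cmod (b n))^2)/2"
      using sum_squares_ge_zero[of "cmod (a n) - cmod (b n)" 0]
      by (simp add: power2_diff algebra_simps power2_eq_square)
    finally show ?thesis .
  qed
  note bnd = this
  have sa: "summable (\<lambda>n. (cmod (a n))^2)" and sb: "summable (\<lambda>n. (cmod (b n))^2)"
    using assms unfolding H2_iff by auto
  have s: "summable (\<lambda>n. ((cmod (a n))^2 + (cmod (b n))^2)/2)"
    by (rule summable_divide[OF summable_add[OF sa sb]])
  have "summable (\<lambda>n. norm (a n * cnj (b n)))"
  proof (rule summable_comparison_test'[OF s, where N=0])
    fix n show "norm (norm (a n * cnj (b n))) \<le> ((cmod (a n))^2 + (cmod (b n))^2)/2"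
      using bnd[of n] by simp
  qed
  then show ?thesis by (rule summable_norm_cancel)
qed

lemma inner_add_left:
  assumes "a \<in> H2" "b \<in> H2" "c \<in> H2"
  shows "h2_inner (\<lambda>n. a n + b n) c = h2_inner a c + h2_inner b c"
  unfolding h2_inner_def
  using suminf_add[OF H2_summable_inner[OF assms(1,3)] H2_summable_inner[OF assms(2,3)]]
  by (simp add: algebra_simps)

lemma inner_add_right:
  assumes "a \<in> H2" "b \<in> H2" "c \<in> H2"
  shows "h2_inner a (\<lambda>n. b n + c n) = h2_inner a b + h2_inner a c"
  unfolding h2_inner_def
  using suminf_add[OF H2_summable_inner[OF assms(1,2)] H2_summable_inner[OF assms(1,3)]]
  by (simp add: algebra_simps)

lemma inner_diff_left:
  assumes "a \<in> H2" "b \<in> H2" "c \<in> H2"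
  shows "h2_inner (\<lambda>n. a n - b n) c = h2_inner a c - h2_inner b c"
  unfolding h2_inner_def
  using suminf_diff[OF H2_summable_inner[OF assms(1,3)] H2_summable_inner[OF assms(2,3)]]
  by (simp add: algebra_simps)

lemma inner_diff_right:
  assumes "a \<in> H2" "b \<in> H2" "c \<in> H2"
  shows "h2_inner a (\<lambda>n. b n - c n) = h2_inner a b - h2_inner a c"
  unfolding h2_inner_def
  using suminf_diff[OF H2_summable_inner[OF assms(1,2)] H2_summable_inner[OF assms(1,3)]]
  by (simp add: algebra_simps)

lemma inner_scale_left:
  assumes "a \<in> H2" "c \<in> H2"
  shows "h2_inner (\<lambda>n. k * a n) c = k * h2_inner a c"
  unfolding h2_inner_def
  using suminf_mult[OF H2_summable_inner[OF assms], of k]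
  by (simp add: algebra_simps)

lemma inner_scale_right:
  assumes "a \<in> H2" "c \<in> H2"
  shows "h2_inner a (\<lambda>n. k * c n) = cnj k * h2_inner a c"
  unfolding h2_inner_def
  using suminf_mult[OF H2_summable_inner[OF assms], of "cnj k"]
  by (simp add: algebra_simps)

lemma inner_zero_left [simp]: "h2_inner (\<lambda>n. 0) c = 0"
  by (simp add: h2_inner_def)

lemma inner_zero_right [simp]: "h2_inner a (\<lambda>n. 0) = 0"
  by (simp add: h2_inner_def)

lemma inner_cnj:
  assumes "a \<in> H2" "b \<in> H2"
  shows "h2_inner b a = cnj (h2_inner a b)"
proof -
  have "(\<lambda>n. a n * cnj (b n)) sums h2_inner a b"
    unfolding h2_inner_def using H2_summable_inner[OF assms] by (simp add: summable_sums)
  then have "(\<lambda>n. cnj (a n * cnj (b n))) sums cnj (h2_inner a b)"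
    by (simp only: sums_cnj)
  then have "cnj (h2_inner a b) = (\<Sum>n. cnj (a n * cnj (b n)))"
    by (simp add: sums_iff)
  then show ?thesis unfolding h2_inner_def by (simp add: mult.commute)
qed

lemma inner_head:
  assumes "a \<in> H2" "b \<in> H2"
  shows "h2_inner a b = a 0 * cnj (b 0) + h2_inner (\<lambda>n. a (Suc n)) (\<lambda>n. b (Suc n))"
  unfolding h2_inner_def
  using suminf_split_head[OF H2_summable_inner[OF assms]] by simp

lemma H2_Suc [intro]: "a \<in> H2 \<Longrightarrow> (\<lambda>n. a (Suc n)) \<in> H2"
  unfolding H2_iff using summable_Suc_iff[of "\<lambda>n. (cmod (a n))^2"] by simp

lemma H2_shift [intro]: "a \<in> H2 \<Longrightarrow> shift a \<in> H2"
proof -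
  assume "a \<in> H2"
  then have "summable (\<lambda>n. (cmod (shift a (Suc n)))^2)" by (simp add: shift_def H2_iff)
  then show ?thesis unfolding H2_iff using summable_Suc_iff[of "\<lambda>n. (cmod (shift a n))^2"] by simp
qed

lemma inner_shift:
  assumes "a \<in> H2" "b \<in> H2"
  shows "h2_inner (shift a) b = h2_inner a (\<lambda>n. b (Suc n))"
proof -
  have e1: "(\<lambda>n. shift a (Suc n)) = a" by (simp add: shift_def)
  have e2: "shift a 0 = 0" by (simp add: shift_def)
  show ?thesis using inner_head[OF H2_shift[OF assms(1)] assms(2)] unfolding e1 e2 by simp
qed

lemma inner_self_sum:
  assumes "a \<in> H2"
  shows "h2_inner a a = of_real (\<Sum>n. (cmod (a n))^2)"
proof -
  have "h2_inner a a = (\<Sum>n. of_real ((cmod (a n))^2))"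
    unfolding h2_inner_def by (simp only: complex_norm_square[symmetric])
  also have "\<dots> = of_real (\<Sum>n. (cmod (a n))^2)"
    using assms by (simp add: suminf_of_real H2_iff)
  finally show ?thesis .
qed

lemma inner_self:
  assumes "a \<in> H2"
  shows "h2_inner a a = of_real ((h2_norm a)^2)"
proof -
  have "(\<Sum>n. (cmod (a n))^2) \<ge> 0"
    using assms by (intro suminf_nonneg) (auto simp: H2_iff)
  then have "(h2_norm a)^2 = (\<Sum>n. (cmod (a n))^2)"
    unfolding h2_norm_def by simp
  then show ?thesis using inner_self_sum[OF assms] by simp
qed

lemma inner_self_zero:
  assumes "a \<in> H2" "h2_inner a a = 0"
  shows "a = (\<lambda>n. 0)"
proof -
  have s: "(\<Sum>n. (cmod (a n))^2) = 0"
    using assms(2) inner_self_sum[OF assms(1)] by simp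
  have sm: "summable (\<lambda>n. (cmod (a n))^2)" using assms(1) by (simp add: H2_iff)
  have "(\<lambda>n. (cmod (a n))^2) = (\<lambda>n. 0)"
    using suminf_eq_zero_iff[OF sm] s by simp
  then have "\<And>n. (cmod (a n))^2 = 0" by metis
  then show ?thesis by auto
qed


lemma bounded_lin_geom:
  fixes y :: real
  assumes "0 \<le> y" "y < 1"
  obtains B where "\<And>n. real (n + j) * y^n \<le> B"
proof -
  have "(\<lambda>n. of_nat n * y^n) \<longlonglongrightarrow> 0"
    using powser_times_n_limit_0[of y] assms by simp
  then have "Bseq (\<lambda>n. of_nat n * y^n)" by (rule convergent_imp_Bseq[OF convergentI])
  then obtain K where K: "\<And>n. norm (of_nat n * y^n) \<le> K" by (auto simp: Bseq_def)
  have "real (n + j) * y^n \<le> K + real j" for n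
  proof -
    have "real (n + j) * y^n = real n * y^n + real j * y^n" by (simp add: algebra_simps)
    moreover have "real n * y^n \<le> K" using K[of n] assms by simp
    moreover have "real j * y^n \<le> real j" using assms by (simp add: mult_left_le power_le_one)
    ultimately show ?thesis by linarith
  qed
  then show ?thesis using that by blast
qed

lemma summable_poly_geom:
  fixes x :: real
  assumes "0 \<le> x" "x < 1"
  shows "summable (\<lambda>n. real (n + j) ^ k * x^n)"
  using assms
proof (induction k arbitrary: x)
  case 0
  then show ?case by (simp add: summable_geometric)
next
  case (Suc k)
  define y where "y = sqrt x"
  have y0: "0 \<le> y" and y1: "y < 1" using Suc.prems by (auto simp: y_def)
  have yy: "y^n * y^n = x^n" for n using Suc.prems by (simp add: y_def power_mult_distrib[symmetric])
  obtain B where B: "\<And>n. real (n + j) * y^n \<le> B" using bounded_lin_geom[OF y0 y1] by blast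
  have IH: "summable (\<lambda>n. real (n + j) ^ k * y^n)" using Suc.IH y0 y1 by simp
  have s: "summable (\<lambda>n. B * (real (n + j) ^ k * y^n))" by (rule summable_mult[OF IH])
  show ?case
  proof (rule summable_comparison_test'[OF s, where N=0])
    fix n
    have "norm (real (n + j) ^ Suc k * x^n) = real (n + j) ^ Suc k * x^n"
      using Suc.prems by simp
    also have "\<dots> = (real (n + j) ^ k * y^n) * (real (n + j) * y^n)"
      using yy[of n, symmetric] by (simp add: algebra_simps)
    also have "\<dots> \<le> (real (n + j) ^ k * y^n) * B"
      by (rule mult_left_mono[OF B]) (use y0 in simp)
    finally show "norm (real (n + j) ^ Suc k * x^n) \<le> B * (real (n + j) ^ k * y^n)"
      by (simp add: algebra_simps)
  qed
qed

definition ub :: "complex \<Rightarrow> nat \<Rightarrow> nat \<Rightarrow> complex" where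
  "ub a j n = of_nat (n choose j) * cnj a ^ (n - j)"

lemma ub_0 [simp]: "ub a 0 n = cnj a ^ n" by (simp add: ub_def)

lemma ub_at0: "ub a j 0 = (if j = 0 then 1 else 0)" by (simp add: ub_def)

lemma ub0_Suc: "ub a 0 (Suc n) = cnj a * ub a 0 n" by (simp add: ub_def)

lemma ub_Suc_Suc: "ub a (Suc j) (Suc n) = cnj a * ub a (Suc j) n + ub a j n"
proof -
  have L: "ub a (Suc j) (Suc n) = (of_nat (n choose j) + of_nat (n choose Suc j)) * cnj a ^ (n - j)"
    by (simp add: ub_def)
  have A: "cnj a * ub a (Suc j) n = of_nat (n choose Suc j) * cnj a ^ (n - j)"
  proof (cases "Suc j \<le> n")
    case True
    then have "n - j = Suc (n - Suc j)" by simp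
    then have e: "cnj a ^ (n - j) = cnj a * cnj a ^ (n - Suc j)" by simp
    show ?thesis by (simp add: ub_def e)
  next
    case False
    then show ?thesis by (simp add: ub_def)
  qed
  have B: "ub a j n = of_nat (n choose j) * cnj a ^ (n - j)" by (simp add: ub_def)
  show ?thesis unfolding L A B by (simp add: algebra_simps)
qed

lemma ub_H2:
  assumes "cmod a < 1"
  shows "ub a j \<in> H2"
proof -
  define x where "x = (cmod a)^2"
  have x0: "0 \<le> x" and x1: "x < 1" using assms by (auto simp: x_def power_less_one_iff abs_square_less_1)
  have s: "summable (\<lambda>n. real (n + j) ^ (2*j) * x^n)" by (rule summable_poly_geom[OF x0 x1])
  have "summable (\<lambda>n. (cmod (ub a j (n + j)))^2)"
  proof (rule summable_comparison_test'[OF s, where N=0])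
    fix n
    have "(cmod (ub a j (n + j)))^2 = real ((n + j) choose j) ^ 2 * x^n"
      by (simp add: ub_def norm_mult norm_power x_def power_mult_distrib power_mult[symmetric] mult.commute)
    also have "\<dots> \<le> real (n + j) ^ (2*j) * x^n"
    proof (rule mult_right_mono)
      have "(n + j) choose j \<le> (n + j) ^ j" by (rule binomial_le_pow) simp
      then have "real ((n + j) choose j) \<le> real (n + j) ^ j" by (metis of_nat_le_iff of_nat_power)
      then have "real ((n + j) choose j) ^ 2 \<le> (real (n + j) ^ j)^2" by (rule power_mono) simp
      then show "real ((n + j) choose j) ^ 2 \<le> real (n + j) ^ (2*j)"
        by (simp add: power_mult[symmetric] mult.commute)
    qed (use x0 in simp)
    finally show "norm ((cmod (ub a j (n + j)))^2) \<le> real (n + j) ^ (2*j) * x^n" by simp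
  qed
  then show ?thesis unfolding H2_iff by (simp add: summable_iff_shift[of "\<lambda>n. (cmod (ub a j n))^2" j])
qed

definition Tdiff :: "complex \<Rightarrow> (nat \<Rightarrow> complex) \<Rightarrow> nat \<Rightarrow> complex" where
  "Tdiff a f n = f (Suc n) - cnj a * f n"

lemma Tdiff_ub0: "Tdiff a (ub a 0) = (\<lambda>n. 0)"
  by (rule ext) (simp add: Tdiff_def ub0_Suc del: ub_0)

lemma Tdiff_ubS: "Tdiff a (ub a (Suc j)) = ub a j"
  by (rule ext) (simp add: Tdiff_def ub_Suc_Suc)

lemma Tdiff_zero: "Tdiff a (\<lambda>n. 0) = (\<lambda>n. 0)"
  by (rule ext) (simp add: Tdiff_def)

lemma recur_Tdiff:
  "f (m+3) - 3 * cnj a * f (m+2) + 3 * (cnj a)^2 * f (m+1) - (cnj a)^3 * f m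
   = Tdiff a (Tdiff a (Tdiff a f)) m"
  by (simp add: Tdiff_def eval_nat_numeral algebra_simps)

lemma ub_recur:
  assumes "j \<le> 2"
  shows "ub a j (m+3) - 3 * cnj a * ub a j (m+2) + 3 * (cnj a)^2 * ub a j (m+1) - (cnj a)^3 * ub a j m = 0"
proof -
  have "j = 0 \<or> j = 1 \<or> j = 2" using assms by auto
  then show ?thesis unfolding recur_Tdiff
  proof (elim disjE)
    assume "j = 0" then show "Tdiff a (Tdiff a (Tdiff a (ub a j))) m = 0"
      by (simp only: Tdiff_ub0 Tdiff_zero)
  next
    assume "j = 1" then show "Tdiff a (Tdiff a (Tdiff a (ub a j))) m = 0"
      by (simp only: One_nat_def Tdiff_ubS Tdiff_ub0 Tdiff_zero)
  next
    assume "j = 2" then show "Tdiff a (Tdiff a (Tdiff a (ub a j))) m = 0"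
      by (simp only: numeral_2_eq_2 Tdiff_ubS Tdiff_ub0 Tdiff_zero)
  qed
qed


definition Gf :: "(nat \<Rightarrow> complex) \<Rightarrow> complex \<Rightarrow> complex" where
  "Gf g z = (\<Sum>n. g n * z^n)"

definition phi :: "complex \<Rightarrow> complex \<Rightarrow> complex" where
  "phi a z = ((z - a) / (1 - cnj a * z))^3"

lemma H2_bounded:
  assumes "g \<in> H2"
  obtains K where "\<And>n. cmod (g n) \<le> K"
proof -
  have "(\<lambda>n. (cmod (g n))^2) \<longlonglongrightarrow> 0"
    using assms unfolding H2_iff by (rule summable_LIMSEQ_zero)
  then have "Bseq (\<lambda>n. (cmod (g n))^2)" by (rule convergent_imp_Bseq[OF convergentI])
  then obtain K where K: "\<And>n. norm ((cmod (g n))^2) \<le> K" by (auto simp: Bseq_def)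
  have "cmod (g n) \<le> 1 + K" for n
  proof -
    have "cmod (g n) \<le> 1 + (cmod (g n))^2"
      using sum_squares_ge_zero[of "cmod (g n) - 1/2" 0]
      by (simp add: power2_eq_square algebra_simps)
    then show ?thesis using K[of n] by simp
  qed
  then show ?thesis using that by blast
qed

lemma Gf_sums:
  assumes "g \<in> H2" "cmod z < 1"
  shows "(\<lambda>n. g n * z^n) sums Gf g z"
proof -
  obtain K where K: "\<And>n. cmod (g n) \<le> K" using H2_bounded[OF assms(1)] by blast
  have s: "summable (\<lambda>n. K * (cmod z)^n)"
    by (rule summable_mult[OF summable_geometric]) (use assms(2) in simp)
  have "summable (\<lambda>n. norm (g n * z^n))"
  proof (rule summable_comparison_test'[OF s, where N=0])
    fix n
    have "norm (norm (g n * z^n)) = cmod (g n) * (cmod z)^n" by (simp add: norm_mult norm_power)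
    also have "\<dots> \<le> K * (cmod z)^n" by (rule mult_right_mono[OF K]) simp
    finally show "norm (norm (g n * z^n)) \<le> K * (cmod z)^n" .
  qed
  then have "summable (\<lambda>n. g n * z^n)" by (rule summable_norm_cancel)
  then show ?thesis unfolding Gf_def by (simp add: summable_sums)
qed

lemma Gf_holo:
  assumes "g \<in> H2"
  shows "Gf g holomorphic_on ball 0 1"
  by (rule power_series_holomorphic[where a=g]) (use Gf_sums[OF assms] in auto)

lemma Gf_fps:
  assumes "g \<in> H2"
  shows "Gf g has_fps_expansion Abs_fps g"
proof (rule has_fps_expansionI)
  have "\<forall>u\<in>ball 0 1. (\<lambda>n. fps_nth (Abs_fps g) n * u ^ n) sums Gf g u"
    using Gf_sums[OF assms] by simp
  then show "\<forall>\<^sub>F u in nhds 0. (\<lambda>n. fps_nth (Abs_fps g) n * u ^ n) sums Gf g u"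
    unfolding eventually_nhds by (intro exI[of _ "ball 0 1"]) auto
qed

lemma denom_nz:
  assumes "cmod a < 1" "cmod z < 1"
  shows "1 - cnj a * z \<noteq> 0"
proof
  assume "1 - cnj a * z = 0"
  then have "cnj a * z = 1" by simp
  then have "cmod a * cmod z = 1" by (metis complex_mod_cnj norm_mult norm_one)
  moreover have "cmod a * cmod z < 1"
  proof -
    have "cmod a * cmod z \<le> cmod a" by (rule mult_left_le) (use assms in auto)
    then show ?thesis using assms by simp
  qed
  ultimately show False by simp
qed


lemma phi_holo:
  assumes "cmod a < 1"
  shows "phi a holomorphic_on ball 0 1"
  unfolding phi_def
  by (intro holomorphic_intros) (use denom_nz[OF assms] in auto)

definition PHI :: "complex \<Rightarrow> complex fps" where
  "PHI a = fps_expansion (phi a) 0"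

lemma phi_fps:
  assumes "cmod a < 1"
  shows "phi a has_fps_expansion PHI a"
  unfolding PHI_def by (rule has_fps_expansion_fps_expansion[OF open_ball _ phi_holo[OF assms]]) simp

lemma taylor_phi:
  assumes "cmod a < 1"
  shows "taylor_coeff (phi a) k = fps_nth (PHI a) k"
  unfolding taylor_coeff_def using fps_nth_fps_expansion[OF phi_fps[OF assms]] by simp

lemma mult_by_fps:
  assumes "cmod a < 1"
  shows "mult_by (phi a) g n = fps_nth (PHI a * Abs_fps g) n"
  unfolding mult_by_def fps_mult_nth taylor_phi[OF assms] by (simp add: atLeast0AtMost)

lemma H_fps:
  assumes "cmod a < 1" "g \<in> H2"
  shows "(\<lambda>z. phi a z * Gf g z) has_fps_expansion (PHI a * Abs_fps g)"
  by (rule has_fps_expansion_mult[OF phi_fps[OF assms(1)] Gf_fps[OF assms(2)]])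

lemma mult_by_deriv:
  assumes "cmod a < 1" "g \<in> H2"
  shows "mult_by (phi a) g n = (deriv ^^ n) (\<lambda>z. phi a z * Gf g z) 0 / fact n"
  unfolding mult_by_fps[OF assms(1)] by (rule fps_nth_fps_expansion[OF H_fps[OF assms]])

lemma deriv_series:
  assumes "H holomorphic_on ball 0 1" "cmod w < 1"
  shows "(\<lambda>m. (deriv ^^ (m + j)) H 0 / fact m * w^m) sums (deriv ^^ j) H w"
proof -
  have "(deriv ^^ j) H holomorphic_on ball 0 1"
    by (rule holomorphic_higher_deriv[OF assms(1) open_ball])
  from holomorphic_power_series[OF this, of w] assms(2)
  have "(\<lambda>n. (deriv ^^ n) ((deriv ^^ j) H) 0 / fact n * (w - 0)^n) sums (deriv ^^ j) H w"
    by simp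
  moreover have "(deriv ^^ n) ((deriv ^^ j) H) = (deriv ^^ (n + j)) H" for n
    by (simp add: funpow_add)
  ultimately show ?thesis by simp
qed


lemma deriv_cube:
  "deriv (\<lambda>z::complex. (z - a)^3) = (\<lambda>z. 3 * (z - a)^2)"
proof
  fix z :: complex
  have "((\<lambda>z. (z - a)^3) has_field_derivative 3 * (z - a)^2) (at z)"
    by (auto intro!: derivative_eq_intros simp: eval_nat_numeral)
  then show "deriv (\<lambda>z. (z - a)^3) z = 3 * (z - a)^2" by (rule DERIV_imp_deriv)
qed

lemma deriv_sq3:
  "deriv (\<lambda>z::complex. 3 * (z - a)^2) = (\<lambda>z. 6 * (z - a))"
proof
  fix z :: complex
  have "((\<lambda>z. 3 * (z - a)^2) has_field_derivative 6 * (z - a)) (at z)"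
    by (auto intro!: derivative_eq_intros simp: eval_nat_numeral)
  then show "deriv (\<lambda>z. 3 * (z - a)^2) z = 6 * (z - a)" by (rule DERIV_imp_deriv)
qed

lemma cube_higher_deriv:
  assumes "i \<le> 2"
  shows "(deriv ^^ i) (\<lambda>z::complex. (z - a)^3) a = 0"
proof -
  have "i = 0 \<or> i = 1 \<or> i = 2" using assms by auto
  moreover have "(deriv ^^ 0) (\<lambda>z::complex. (z - a)^3) a = 0" by simp
  moreover have "(deriv ^^ 1) (\<lambda>z::complex. (z - a)^3) a = 0" by (simp add: deriv_cube)
  moreover have "(deriv ^^ 2) (\<lambda>z::complex. (z - a)^3) a = 0"
  proof -
    have "(deriv ^^ 2) (\<lambda>z::complex. (z - a)^3) a = deriv (deriv (\<lambda>z::complex. (z - a)^3)) a"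
      by (simp add: numeral_2_eq_2)
    also have "deriv (\<lambda>z::complex. (z - a)^3) = (\<lambda>z. 3 * (z - a)^2)" by (rule deriv_cube)
    also have "deriv (\<lambda>z::complex. 3 * (z - a)^2) = (\<lambda>z. 6 * (z - a))" by (rule deriv_sq3)
    finally show ?thesis by simp
  qed
  ultimately show ?thesis by auto
qed

lemma H_vanish:
  assumes a: "cmod a < 1" and g: "g \<in> H2" and j: "j \<le> 2"
  shows "(deriv ^^ j) (\<lambda>z. phi a z * Gf g z) a = 0"
proof -
  define K where "K = (\<lambda>z. Gf g z / (1 - cnj a * z)^3)"
  have eqH: "(\<lambda>z. phi a z * Gf g z) = (\<lambda>z. (z - a)^3 * K z)"
    by (rule ext) (simp add: phi_def K_def power_divide)
  have Kh: "K holomorphic_on ball 0 1"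
    unfolding K_def
    by (intro holomorphic_intros Gf_holo[OF g]) (use denom_nz[OF a] in auto)
  have ph: "(\<lambda>z. (z - a)^3) holomorphic_on ball 0 1" by (intro holomorphic_intros)
  have ain: "a \<in> ball 0 1" using a by simp
  have "(deriv ^^ j) (\<lambda>z. (z - a)^3 * K z) a
      = (\<Sum>i = 0..j. of_nat (j choose i) * (deriv ^^ i) (\<lambda>z. (z - a)^3) a * (deriv ^^ (j - i)) K a)"
    by (rule higher_deriv_mult[OF ph Kh open_ball ain])
  also have "\<dots> = 0"
    by (intro sum.neutral ballI) (use j cube_higher_deriv in auto)
  finally show ?thesis unfolding eqH .
qed

lemma ub_orth:
  assumes a: "cmod a < 1" and g: "g \<in> H2" and j: "j \<le> 2"
  shows "(\<lambda>n. ub a j n * cnj (mult_by (phi a) g n)) sums 0"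
proof -
  define H where "H = (\<lambda>z. phi a z * Gf g z)"
  define h where "h = mult_by (phi a) g"
  have hH: "h n = (deriv ^^ n) H 0 / fact n" for n
    unfolding h_def H_def by (rule mult_by_deriv[OF a g])
  have Hh: "H holomorphic_on ball 0 1"
    unfolding H_def by (intro holomorphic_intros phi_holo[OF a] Gf_holo[OF g])
  have s1: "(\<lambda>m. (deriv ^^ (m + j)) H 0 / fact m * a^m) sums 0"
    using deriv_series[OF Hh a, of j] H_vanish[OF a g j] unfolding H_def by simp
  have trm: "(deriv ^^ (m + j)) H 0 / fact m * a^m = fact j * (cnj (ub a j (m + j)) * h (m + j))" for m
  proof -
    have bf: "(of_nat ((m + j) choose j) :: complex) = fact (m + j) / (fact j * fact m)"
      using binomial_fact[of j "m + j"] by simp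
    have "cnj (ub a j (m + j)) = of_nat ((m + j) choose j) * a^m"
      by (simp add: ub_def)
    then show ?thesis unfolding hH bf by (simp add: field_simps)
  qed
  have "(\<lambda>m. fact j * (cnj (ub a j (m + j)) * h (m + j))) sums 0"
    using s1 unfolding trm .
  then have "(\<lambda>m. (1 / fact j) * (fact j * (cnj (ub a j (m + j)) * h (m + j)))) sums ((1 / fact j) * 0)"
    by (rule sums_mult)
  then have "(\<lambda>m. cnj (ub a j (m + j)) * h (m + j)) sums 0" by simp
  moreover have "\<And>i. i < j \<Longrightarrow> cnj (ub a j i) * h i = 0" by (simp add: ub_def)
  ultimately have "(\<lambda>n. cnj (ub a j n) * h n) sums 0"
    using sums_zero_iff_shift[of j "\<lambda>n. cnj (ub a j n) * h n" 0] by simp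
  then have "(\<lambda>n. cnj (cnj (ub a j n) * h n)) sums cnj 0" by (simp only: sums_cnj)
  then show ?thesis unfolding h_def by (simp add: mult.commute)
qed


definition pm :: "complex \<Rightarrow> nat \<Rightarrow> nat \<Rightarrow> complex" where
  "pm a m n = (if n = m then 1 else if n = Suc m then -3*cnj a else if n = Suc (Suc m) then 3*(cnj a)^2
     else if n = Suc (Suc (Suc m)) then -((cnj a)^3) else 0)"

definition qm :: "complex \<Rightarrow> nat \<Rightarrow> nat \<Rightarrow> complex" where
  "qm a m n = (if n = m then -(a^3) else if n = Suc m then 3*a^2 else if n = Suc (Suc m) then -3*a
     else if n = Suc (Suc (Suc m)) then 1 else 0)"

lemma pm_sums: "(\<lambda>n. pm a m n * u^n) sums ((1 - cnj a * u)^3 * u^m)"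
proof -
  have "(\<lambda>n. pm a m n * u^n) sums (\<Sum>n\<in>{m, Suc m, Suc (Suc m), Suc (Suc (Suc m))}. pm a m n * u^n)"
    by (rule sums_finite) (auto simp: pm_def)
  also have "(\<Sum>n\<in>{m, Suc m, Suc (Suc m), Suc (Suc (Suc m))}. pm a m n * u^n) = (1 - cnj a * u)^3 * u^m"
    by (simp add: pm_def algebra_simps eval_nat_numeral)
  finally show ?thesis .
qed

lemma qm_sums: "(\<lambda>n. qm a m n * u^n) sums ((u - a)^3 * u^m)"
proof -
  have "(\<lambda>n. qm a m n * u^n) sums (\<Sum>n\<in>{m, Suc m, Suc (Suc m), Suc (Suc (Suc m))}. qm a m n * u^n)"
    by (rule sums_finite) (auto simp: qm_def)
  also have "(\<Sum>n\<in>{m, Suc m, Suc (Suc m), Suc (Suc (Suc m))}. qm a m n * u^n) = (u - a)^3 * u^m"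
    by (simp add: qm_def algebra_simps eval_nat_numeral)
  finally show ?thesis .
qed

lemma pm_H2: "pm a m \<in> H2"
  unfolding H2_iff
  by (rule summable_finite[of "{m, Suc m, Suc (Suc m), Suc (Suc (Suc m))}"]) (auto simp: pm_def)

lemma mult_by_pm:
  assumes a: "cmod a < 1"
  shows "mult_by (phi a) (pm a m) = qm a m"
proof -
  have pf: "(\<lambda>u. (1 - cnj a * u)^3 * u^m) has_fps_expansion Abs_fps (pm a m)"
    by (rule has_fps_expansionI) (use pm_sums in simp)
  have qf: "(\<lambda>u. (u - a)^3 * u^m) has_fps_expansion Abs_fps (qm a m)"
    by (rule has_fps_expansionI) (use qm_sums in simp)
  have prod: "(\<lambda>u. phi a u * ((1 - cnj a * u)^3 * u^m)) has_fps_expansion PHI a * Abs_fps (pm a m)"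
    by (rule has_fps_expansion_mult[OF phi_fps[OF a] pf])
  have ev: "eventually (\<lambda>u. phi a u * ((1 - cnj a * u)^3 * u^m) = (u - a)^3 * u^m) (nhds 0)"
    unfolding eventually_nhds
  proof (intro exI[of _ "ball 0 1"] conjI ballI)
    fix u :: complex assume "u \<in> ball 0 1"
    then have "1 - cnj a * u \<noteq> 0" using denom_nz[OF a] by simp
    then show "phi a u * ((1 - cnj a * u)^3 * u^m) = (u - a)^3 * u^m"
      by (simp add: phi_def power_divide field_simps)
  qed auto
  have "(\<lambda>u. (u - a)^3 * u^m) has_fps_expansion PHI a * Abs_fps (pm a m)"
    using has_fps_expansion_cong[OF ev refl] prod by simp
  then have "PHI a * Abs_fps (pm a m) = Abs_fps (qm a m)"
    using qf by (rule fps_expansion_unique_complex)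
  then show ?thesis
    by (intro ext) (simp add: mult_by_fps[OF a])
qed

lemma inner_qm:
  "h2_inner f (qm a m) = f (m+3) - 3 * cnj a * f (m+2) + 3 * (cnj a)^2 * f (m+1) - (cnj a)^3 * f m"
proof -
  have "h2_inner f (qm a m) = (\<Sum>n\<in>{m, Suc m, Suc (Suc m), Suc (Suc (Suc m))}. f n * cnj (qm a m n))"
    unfolding h2_inner_def by (rule suminf_finite) (auto simp: qm_def)
  also have "\<dots> = f (m+3) - 3 * cnj a * f (m+2) + 3 * (cnj a)^2 * f (m+1) - (cnj a)^3 * f m"
    by (simp add: qm_def algebra_simps eval_nat_numeral)
  finally show ?thesis .
qed

lemma model_recur:
  assumes a: "cmod a < 1" and f: "f \<in> model_space (phi a)"
  shows "f (m+3) - 3 * cnj a * f (m+2) + 3 * (cnj a)^2 * f (m+1) - (cnj a)^3 * f m = 0"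
proof -
  have "h2_inner f (mult_by (phi a) (pm a m)) = 0"
    using f pm_H2 unfolding model_space_def by blast
  then show ?thesis unfolding mult_by_pm[OF a] inner_qm .
qed

lemma model_sub:
  assumes a: "cmod a < 1" and f: "f \<in> model_space (phi a)"
  shows "\<exists>d0 d1 d2. \<forall>n. f n = d0 * ub a 0 n + d1 * ub a 1 n + d2 * ub a 2 n"
proof -
  define d0 where "d0 = f 0"
  define d1 where "d1 = f 1 - cnj a * f 0"
  define d2 where "d2 = f 2 - 2 * cnj a * f 1 + (cnj a)^2 * f 0"
  define g where "g n = d0 * ub a 0 n + d1 * ub a 1 n + d2 * ub a 2 n" for n
  have grec: "g (m+3) - 3 * cnj a * g (m+2) + 3 * (cnj a)^2 * g (m+1) - (cnj a)^3 * g m = 0" for m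
  proof -
    have "g (m+3) - 3 * cnj a * g (m+2) + 3 * (cnj a)^2 * g (m+1) - (cnj a)^3 * g m
      = d0 * (ub a 0 (m+3) - 3 * cnj a * ub a 0 (m+2) + 3 * (cnj a)^2 * ub a 0 (m+1) - (cnj a)^3 * ub a 0 m)
      + d1 * (ub a 1 (m+3) - 3 * cnj a * ub a 1 (m+2) + 3 * (cnj a)^2 * ub a 1 (m+1) - (cnj a)^3 * ub a 1 m)
      + d2 * (ub a 2 (m+3) - 3 * cnj a * ub a 2 (m+2) + 3 * (cnj a)^2 * ub a 2 (m+1) - (cnj a)^3 * ub a 2 m)"
      unfolding g_def by (simp add: algebra_simps)
    also have "\<dots> = 0" using ub_recur[of 0 a m] ub_recur[of 1 a m] ub_recur[of 2 a m] by simp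
    finally show ?thesis .
  qed
  have frec: "f (m+3) = 3 * cnj a * f (m+2) - 3 * (cnj a)^2 * f (m+1) + (cnj a)^3 * f m" for m
    using model_recur[OF a f, of m] by (simp add: algebra_simps)
  have grec': "g (m+3) = 3 * cnj a * g (m+2) - 3 * (cnj a)^2 * g (m+1) + (cnj a)^3 * g m" for m
    using grec[of m] by (simp add: algebra_simps)
  have init0: "g 0 = f 0" by (simp add: g_def d0_def ub_def)
  have init1: "g 1 = f 1" by (simp add: g_def d0_def d1_def ub_def)
  have init2: "g 2 = f 2" by (simp add: g_def d0_def d1_def d2_def ub_def algebra_simps power2_eq_square)
  have "f n = g n" for n
  proof (induction n rule: nat_less_induct)
    case (1 n)
    show ?case
    proof (cases "n < 3")
      case True
      then have "n = 0 \<or> n = 1 \<or> n = 2" by auto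
      then show ?thesis using init0 init1 init2 by auto
    next
      case False
      then obtain m where m: "n = m + 3" by (metis add.commute le_Suc_ex not_less)
      have "f (m+2) = g (m+2)" "f (m+1) = g (m+1)" "f m = g m" using 1 m by auto
      then show ?thesis unfolding m frec grec' by simp
    qed
  qed
  then show ?thesis unfolding g_def by blast
qed


definition sg :: "complex \<Rightarrow> complex" where "sg a = complex_of_real (sqrt (1 - (cmod a)^2))"
definition cc :: "complex \<Rightarrow> complex" where "cc a = complex_of_real (1 - (cmod a)^2)"

definition e1 :: "complex \<Rightarrow> nat \<Rightarrow> complex" where "e1 a n = sg a * ub a 0 n"
definition e2 :: "complex \<Rightarrow> nat \<Rightarrow> complex" where "e2 a n = sg a * (cc a * ub a 1 n - a * ub a 0 n)"
definition e3 :: "complex \<Rightarrow> nat \<Rightarrow> complex" where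
  "e3 a n = sg a * ((cc a)^2 * ub a 2 n - 2 * a * cc a * ub a 1 n + a^2 * ub a 0 n)"

lemma gram_rec:
  assumes H: "u \<in> H2" "v \<in> H2" "x \<in> H2" "y \<in> H2"
    and ru: "\<And>n. u (Suc n) = cnj a * u n + x n" and rv: "\<And>n. v (Suc n) = cnj a * v n + y n"
  shows "complex_of_real (1 - (cmod a)^2) * h2_inner u v
     = u 0 * cnj (v 0) + cnj a * h2_inner u y + a * h2_inner x v + h2_inner x y"
proof -
  have eu: "(\<lambda>n. u (Suc n)) = (\<lambda>n. cnj a * u n + x n)" using ru by auto
  have ev: "(\<lambda>n. v (Suc n)) = (\<lambda>n. cnj a * v n + y n)" using rv by auto
  have Hs: "(\<lambda>n. cnj a * u n) \<in> H2" "(\<lambda>n. cnj a * v n) \<in> H2" using H by auto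
  have "h2_inner u v = u 0 * cnj (v 0) + h2_inner (\<lambda>n. cnj a * u n + x n) (\<lambda>n. cnj a * v n + y n)"
    using inner_head[OF H(1,2)] unfolding eu ev .
  also have "h2_inner (\<lambda>n. cnj a * u n + x n) (\<lambda>n. cnj a * v n + y n)
      = h2_inner (\<lambda>n. cnj a * u n) (\<lambda>n. cnj a * v n + y n) + h2_inner x (\<lambda>n. cnj a * v n + y n)"
    by (rule inner_add_left) (use H Hs in auto)
  also have "h2_inner (\<lambda>n. cnj a * u n) (\<lambda>n. cnj a * v n + y n)
      = h2_inner (\<lambda>n. cnj a * u n) (\<lambda>n. cnj a * v n) + h2_inner (\<lambda>n. cnj a * u n) y"
    by (rule inner_add_right) (use H Hs in auto)
  also have "h2_inner x (\<lambda>n. cnj a * v n + y n) = h2_inner x (\<lambda>n. cnj a * v n) + h2_inner x y"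
    by (rule inner_add_right) (use H Hs in auto)
  also have "h2_inner (\<lambda>n. cnj a * u n) (\<lambda>n. cnj a * v n) = cnj a * (a * h2_inner u v)"
    using inner_scale_left[OF H(1) Hs(2), of "cnj a"] inner_scale_right[OF H(1,2), of "cnj a"] by simp
  also have "h2_inner (\<lambda>n. cnj a * u n) y = cnj a * h2_inner u y"
    by (rule inner_scale_left[OF H(1,4)])
  also have "h2_inner x (\<lambda>n. cnj a * v n) = a * h2_inner x v"
    using inner_scale_right[OF H(3,2), of "cnj a"] by simp
  finally have "h2_inner u v = u 0 * cnj (v 0) + ((cnj a * (a * h2_inner u v) + cnj a * h2_inner u y)
      + (a * h2_inner x v + h2_inner x y))" .
  note eq = this
  have "cnj a * a = complex_of_real ((cmod a)^2)" by (metis complex_norm_square mult.commute)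
  then have kx: "cnj a * (a * h2_inner u v) = complex_of_real ((cmod a)^2) * h2_inner u v"
    by (metis mult.assoc)
  define X where "X = h2_inner u v"
  define k where "k = complex_of_real ((cmod a)^2)"
  have eq2: "X = u 0 * cnj (v 0) + ((k * X + cnj a * h2_inner u y) + (a * h2_inner x v + h2_inner x y))"
    using eq unfolding kx X_def k_def .
  then have "X - k * X = u 0 * cnj (v 0) + cnj a * h2_inner u y + a * h2_inner x v + h2_inner x y"
    by (simp add: algebra_simps)
  moreover have "complex_of_real (1 - (cmod a)^2) * X = X - k * X"
    unfolding k_def by (simp only: of_real_diff of_real_1 left_diff_distrib mult_1)
  ultimately show ?thesis unfolding X_def by simp
qed

lemma comb_H2 [intro]:
  assumes "u1 \<in> H2" "u2 \<in> H2" "u3 \<in> H2"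
  shows "(\<lambda>n. p1 * u1 n + p2 * u2 n + p3 * u3 n) \<in> H2"
proof -
  have h: "(\<lambda>n. p1 * u1 n) \<in> H2" "(\<lambda>n. p2 * u2 n) \<in> H2" "(\<lambda>n. p3 * u3 n) \<in> H2"
    using assms by auto
  show ?thesis using H2_add[OF H2_add[OF h(1) h(2)] h(3)] by simp
qed

lemma inner_comb_left:
  assumes "u1 \<in> H2" "u2 \<in> H2" "u3 \<in> H2" "w \<in> H2"
  shows "h2_inner (\<lambda>n. p1 * u1 n + p2 * u2 n + p3 * u3 n) w
       = p1 * h2_inner u1 w + p2 * h2_inner u2 w + p3 * h2_inner u3 w"
proof -
  have h: "(\<lambda>n. p1 * u1 n) \<in> H2" "(\<lambda>n. p2 * u2 n) \<in> H2" "(\<lambda>n. p3 * u3 n) \<in> H2"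
    using assms by auto
  have h12: "(\<lambda>n. p1 * u1 n + p2 * u2 n) \<in> H2" by (rule H2_add[OF h(1,2)])
  have "h2_inner (\<lambda>n. p1 * u1 n + p2 * u2 n + p3 * u3 n) w
      = h2_inner (\<lambda>n. p1 * u1 n + p2 * u2 n) w + h2_inner (\<lambda>n. p3 * u3 n) w"
    using inner_add_left[OF h12 h(3) assms(4)] by simp
  also have "h2_inner (\<lambda>n. p1 * u1 n + p2 * u2 n) w = h2_inner (\<lambda>n. p1 * u1 n) w + h2_inner (\<lambda>n. p2 * u2 n) w"
    using inner_add_left[OF h(1,2) assms(4)] by simp
  finally show ?thesis
    using inner_scale_left[OF assms(1,4)] inner_scale_left[OF assms(2,4)] inner_scale_left[OF assms(3,4)]
    by simp
qed

lemma inner_comb_right: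
  assumes "u1 \<in> H2" "u2 \<in> H2" "u3 \<in> H2" "w \<in> H2"
  shows "h2_inner w (\<lambda>n. p1 * u1 n + p2 * u2 n + p3 * u3 n)
       = cnj p1 * h2_inner w u1 + cnj p2 * h2_inner w u2 + cnj p3 * h2_inner w u3"
proof -
  have "h2_inner w (\<lambda>n. p1 * u1 n + p2 * u2 n + p3 * u3 n)
      = cnj (h2_inner (\<lambda>n. p1 * u1 n + p2 * u2 n + p3 * u3 n) w)"
    by (rule inner_cnj) (use assms in auto)
  also have "\<dots> = cnj (p1 * h2_inner u1 w + p2 * h2_inner u2 w + p3 * h2_inner u3 w)"
    by (simp only: inner_comb_left[OF assms])
  also have "\<dots> = cnj p1 * h2_inner w u1 + cnj p2 * h2_inner w u2 + cnj p3 * h2_inner w u3"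
    using inner_cnj[OF assms(1,4)] inner_cnj[OF assms(2,4)] inner_cnj[OF assms(3,4)] by simp
  finally show ?thesis .
qed

context
  fixes a :: complex
  assumes a: "cmod a < 1"
begin

lemma e_H2 [simp]: "e1 a \<in> H2" "e2 a \<in> H2" "e3 a \<in> H2"
proof -
  have u: "ub a 0 \<in> H2" "ub a 1 \<in> H2" "ub a 2 \<in> H2" using ub_H2[OF a] by auto
  have "ub a 0 = (^) (cnj a)" by (rule ext) simp
  then have u0: "(^) (cnj a) \<in> H2" using u(1) by simp
  show "e1 a \<in> H2" unfolding e1_def[abs_def] by (rule H2_scale[OF u(1)])
  show "e2 a \<in> H2" unfolding e2_def[abs_def]
    by (intro H2_scale H2_diff) (use u u0 in auto)
  show "e3 a \<in> H2" unfolding e3_def[abs_def]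
    by (intro H2_scale H2_add H2_diff) (use u u0 in auto)
qed

lemma e_Suc:
  "e1 a (Suc n) = cnj a * e1 a n"
  "e2 a (Suc n) = cnj a * e2 a n + cc a * e1 a n"
  "e3 a (Suc n) = cnj a * e3 a n + (cc a * e2 a n - a * cc a * e1 a n)"
  by (simp_all add: e1_def e2_def e3_def ub0_Suc ub_Suc_Suc[of a 0, simplified] ub_Suc_Suc[of a 1, simplified]
      numeral_2_eq_2 algebra_simps)

lemma e_at0: "e1 a 0 = sg a" "e2 a 0 = - sg a * a" "e3 a 0 = sg a * a^2"
  by (simp_all add: e1_def e2_def e3_def ub_at0)

lemma sg_sq: "sg a * cnj (sg a) = cc a"
proof -
  have "1 - (cmod a)^2 \<ge> 0" using a by (simp add: abs_square_le_1 less_imp_le)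
  then show ?thesis unfolding sg_def cc_def
    by (simp flip: of_real_mult)
qed

lemma cc_cnj [simp]: "cnj (cc a) = cc a" by (simp add: cc_def)

lemma cc_nz: "cc a \<noteq> 0"
proof -
  have "(cmod a)^2 < 1" using a by (simp add: abs_square_less_1)
  then have "1 - (cmod a)^2 \<noteq> 0" by simp
  then show ?thesis unfolding cc_def by (metis of_real_eq_0_iff)
qed

lemma a_cnj: "a * cnj a = 1 - cc a"
proof -
  have "a * cnj a = complex_of_real ((cmod a)^2)" by (rule complex_norm_square[symmetric])
  then show ?thesis by (simp add: cc_def)
qed


definition C3 :: "complex \<Rightarrow> complex \<Rightarrow> complex \<Rightarrow> nat \<Rightarrow> complex" where
  "C3 p1 p2 p3 = (\<lambda>n. p1 * e1 a n + p2 * e2 a n + p3 * e3 a n)"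

lemma C3_H2 [simp]: "C3 p1 p2 p3 \<in> H2"
  unfolding C3_def by (rule comb_H2) simp_all

lemma C3_left: "w \<in> H2 \<Longrightarrow> h2_inner (C3 p1 p2 p3) w
   = p1 * h2_inner (e1 a) w + p2 * h2_inner (e2 a) w + p3 * h2_inner (e3 a) w"
  unfolding C3_def by (rule inner_comb_left) simp_all

lemma C3_right: "w \<in> H2 \<Longrightarrow> h2_inner w (C3 p1 p2 p3)
   = cnj p1 * h2_inner w (e1 a) + cnj p2 * h2_inner w (e2 a) + cnj p3 * h2_inner w (e3 a)"
  unfolding C3_def by (rule inner_comb_right) simp_all

lemma e1_rec: "e1 a (Suc n) = cnj a * e1 a n + C3 0 0 0 n"
  by (simp add: C3_def e_Suc)
lemma e2_rec: "e2 a (Suc n) = cnj a * e2 a n + C3 (cc a) 0 0 n"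
  by (simp add: C3_def e_Suc)
lemma e3_rec: "e3 a (Suc n) = cnj a * e3 a n + C3 (- (a * cc a)) (cc a) 0 n"
  by (simp add: C3_def e_Suc)

lemma sg_cnj [simp]: "cnj (sg a) = sg a" by (simp add: sg_def)
lemma sg_sq2: "sg a * sg a = cc a" using sg_sq by simp

lemma cc_real: "complex_of_real (1 - (cmod a)^2) = cc a" by (simp add: cc_def)

lemmas gr = gram_rec[where a=a, unfolded cc_real]

lemma G11: "h2_inner (e1 a) (e1 a) = 1"
proof -
  have "cc a * h2_inner (e1 a) (e1 a) = cc a * 1"
    using gr[OF e_H2(1) e_H2(1) C3_H2 C3_H2 e1_rec e1_rec]
    by (simp add: e_at0 sg_sq2 C3_left C3_right)
  then show ?thesis using cc_nz by simp
qed


lemma G12: "h2_inner (e1 a) (e2 a) = 0"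
proof -
  have "cc a * h2_inner (e1 a) (e2 a) = 0"
    using gr[OF e_H2(1) e_H2(2) C3_H2 C3_H2 e1_rec e2_rec]
    by (simp add: e_at0 sg_sq2 C3_left C3_right G11 algebra_simps)
  then show ?thesis using cc_nz by simp
qed


lemma G21: "h2_inner (e2 a) (e1 a) = 0"
  using inner_cnj[OF e_H2(1) e_H2(2)] G12 by simp

lemma G13: "h2_inner (e1 a) (e3 a) = 0"
proof -
  have "cc a * h2_inner (e1 a) (e3 a) = 0"
    using gr[OF e_H2(1) e_H2(3) C3_H2 C3_H2 e1_rec e3_rec]
    by (simp add: e_at0 C3_left C3_right G11 G12 del: mult_eq_0_iff) (use a_cnj sg_sq2 in algebra)
  then show ?thesis using cc_nz by simp
qed

lemma G31: "h2_inner (e3 a) (e1 a) = 0"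
  using inner_cnj[OF e_H2(1) e_H2(3)] G13 by simp

lemma G22: "h2_inner (e2 a) (e2 a) = 1"
proof -
  have "cc a * h2_inner (e2 a) (e2 a) = cc a * 1"
    using gr[OF e_H2(2) e_H2(2) C3_H2 C3_H2 e2_rec e2_rec]
    by (simp add: e_at0 C3_left C3_right G11 G12 G21 del: mult_eq_0_iff) (use a_cnj sg_sq2 in algebra)
  then show ?thesis using cc_nz by simp
qed


lemma G23: "h2_inner (e2 a) (e3 a) = 0"
proof -
  have "cc a * h2_inner (e2 a) (e3 a) = 0"
    using gr[OF e_H2(2) e_H2(3) C3_H2 C3_H2 e2_rec e3_rec]
    by (simp add: e_at0 C3_left C3_right G11 G12 G21 G13 G22 del: mult_eq_0_iff) (use a_cnj sg_sq2 in algebra)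
  then show ?thesis using cc_nz by simp
qed

lemma G32: "h2_inner (e3 a) (e2 a) = 0"
  using inner_cnj[OF e_H2(2) e_H2(3)] G23 by simp

lemma G33: "h2_inner (e3 a) (e3 a) = 1"
proof -
  have "cc a * h2_inner (e3 a) (e3 a) = cc a * 1"
    using gr[OF e_H2(3) e_H2(3) C3_H2 C3_H2 e3_rec e3_rec]
    by (simp add: e_at0 C3_left C3_right G11 G12 G21 G13 G31 G22 G23 G32 del: mult_eq_0_iff)
      (use a_cnj sg_sq2 in algebra)
  then show ?thesis using cc_nz by simp
qed

lemmas Gs = G11 G12 G13 G21 G22 G23 G31 G32 G33

lemma C3_inner: "h2_inner (C3 p1 p2 p3) (C3 q1 q2 q3) = p1 * cnj q1 + p2 * cnj q2 + p3 * cnj q3"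
  by (simp add: C3_left C3_right Gs algebra_simps)

lemma C3_Suc: "(\<lambda>n. C3 q1 q2 q3 (Suc n)) = C3 (cnj a * q1 + cc a * q2 - a * cc a * q3) (cnj a * q2 + cc a * q3) (cnj a * q3)"
  by (rule ext) (simp add: C3_def e_Suc algebra_simps)

lemma C3_shift_inner: "h2_inner (shift (C3 p1 p2 p3)) (C3 q1 q2 q3)
   = p1 * cnj (cnj a * q1 + cc a * q2 - a * cc a * q3) + p2 * cnj (cnj a * q2 + cc a * q3) + p3 * cnj (cnj a * q3)"
  by (simp add: inner_shift C3_Suc C3_inner)


lemma sg_nz: "sg a \<noteq> 0"
proof -
  have "(cmod a)^2 < 1" using a by (simp add: abs_square_less_1)
  then have "sqrt (1 - (cmod a)^2) \<noteq> 0" by simp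
  then show ?thesis unfolding sg_def by (metis of_real_eq_0_iff)
qed

lemma C3_ub_pt: "C3 p1 p2 p3 n = sg a * (p1 - a * p2 + a^2 * p3) * ub a 0 n
    + sg a * (cc a * p2 - 2 * a * cc a * p3) * ub a 1 n + sg a * (cc a)^2 * p3 * ub a 2 n"
  by (simp add: C3_def e1_def e2_def e3_def algebra_simps power2_eq_square del: ub_0)

lemma C3_in_model: "C3 p1 p2 p3 \<in> model_space (phi a)"
proof -
  have "h2_inner (C3 p1 p2 p3) (mult_by (phi a) g) = 0" if g: "g \<in> H2" for g
  proof -
    define h where "h = mult_by (phi a) g"
    define d0 where "d0 = sg a * (p1 - a * p2 + a^2 * p3)"
    define d1 where "d1 = sg a * (cc a * p2 - 2 * a * cc a * p3)"
    define d2 where "d2 = sg a * (cc a)^2 * p3"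
    have s0: "(\<lambda>n. ub a 0 n * cnj (h n)) sums 0" and s1: "(\<lambda>n. ub a 1 n * cnj (h n)) sums 0"
      and s2: "(\<lambda>n. ub a 2 n * cnj (h n)) sums 0"
      unfolding h_def using ub_orth[OF a g, of 0] ub_orth[OF a g, of 1] ub_orth[OF a g, of 2]
      by (simp_all del: ub_0)
    have "(\<lambda>n. d0 * (ub a 0 n * cnj (h n)) + d1 * (ub a 1 n * cnj (h n)) + d2 * (ub a 2 n * cnj (h n)))
        sums (d0 * 0 + d1 * 0 + d2 * 0)"
      by (intro sums_add sums_mult s0 s1 s2)
    moreover have "(\<lambda>n. d0 * (ub a 0 n * cnj (h n)) + d1 * (ub a 1 n * cnj (h n)) + d2 * (ub a 2 n * cnj (h n)))
        = (\<lambda>n. C3 p1 p2 p3 n * cnj (h n))"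
      by (rule ext) (simp add: C3_ub_pt d0_def d1_def d2_def algebra_simps del: ub_0)
    ultimately have "(\<lambda>n. C3 p1 p2 p3 n * cnj (h n)) sums 0" by simp
    then show ?thesis unfolding h2_inner_def h_def by (simp add: sums_iff)
  qed
  then show ?thesis unfolding model_space_def by auto
qed

lemma model_eq: "model_space (phi a) = {C3 p1 p2 p3 | p1 p2 p3. True}"
proof
  show "{C3 p1 p2 p3 | p1 p2 p3. True} \<subseteq> model_space (phi a)" using C3_in_model by auto
next
  show "model_space (phi a) \<subseteq> {C3 p1 p2 p3 | p1 p2 p3. True}"
  proof
    fix f assume f: "f \<in> model_space (phi a)"
    obtain d0 d1 d2 where d: "\<And>n. f n = d0 * ub a 0 n + d1 * ub a 1 n + d2 * ub a 2 n"
      using model_sub[OF a f] by blast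
    define p3 where "p3 = d2 / (sg a * (cc a)^2)"
    define p2 where "p2 = d1 / (sg a * cc a) + 2 * a * p3"
    define p1 where "p1 = d0 / sg a + a * p2 - a^2 * p3"
    have c0: "sg a * (p1 - a * p2 + a^2 * p3) = d0"
      unfolding p1_def using sg_nz by (simp add: field_simps)
    have c1: "sg a * (cc a * p2 - 2 * a * cc a * p3) = d1"
      unfolding p2_def using sg_nz cc_nz by (simp add: field_simps)
    have c2: "sg a * (cc a)^2 * p3 = d2"
      unfolding p3_def using sg_nz cc_nz by (simp add: field_simps)
    have "f = C3 p1 p2 p3"
      by (rule ext) (simp only: d C3_ub_pt c0 c1 c2)
    then show "f \<in> {C3 p1 p2 p3 | p1 p2 p3. True}" by blast
  qed
qed

lemma e_as_C3: "e1 a = C3 1 0 0" "e2 a = C3 0 1 0" "e3 a = C3 0 0 1"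
  by (simp_all add: C3_def)

lemma proj_eq:
  assumes y: "y \<in> H2"
  shows "orth_proj (model_space (phi a)) y = C3 (h2_inner y (e1 a)) (h2_inner y (e2 a)) (h2_inner y (e3 a))"
  unfolding orth_proj_def
proof (rule the1_equality)
  define b0 where "b0 = C3 (h2_inner y (e1 a)) (h2_inner y (e2 a)) (h2_inner y (e3 a))"
  have orth: "h2_inner (\<lambda>n. y n - b0 n) c = 0" if "c \<in> model_space (phi a)" for c
  proof -
    obtain q1 q2 q3 where c: "c = C3 q1 q2 q3" using \<open>c \<in> _\<close> unfolding model_eq by blast
    have "h2_inner (\<lambda>n. y n - b0 n) c = h2_inner y c - h2_inner b0 c"
      by (rule inner_diff_left) (use y c b0_def in simp_all)
    also have "\<dots> = 0"
      unfolding c b0_def C3_inner C3_right[OF y] by (simp add: algebra_simps)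
    finally show ?thesis .
  qed
  show "b0 \<in> model_space (phi a) \<and> (\<forall>c\<in>model_space (phi a). h2_inner (\<lambda>n. y n - b0 n) c = 0)"
    using orth unfolding b0_def by (auto intro: C3_in_model)
  show "\<exists>!b. b \<in> model_space (phi a) \<and> (\<forall>c\<in>model_space (phi a). h2_inner (\<lambda>n. y n - b n) c = 0)"
  proof (rule ex1I[of _ b0])
    show "b0 \<in> model_space (phi a) \<and> (\<forall>c\<in>model_space (phi a). h2_inner (\<lambda>n. y n - b0 n) c = 0)"
      using orth unfolding b0_def by (auto intro: C3_in_model)
  next
    fix b assume b: "b \<in> model_space (phi a) \<and> (\<forall>c\<in>model_space (phi a). h2_inner (\<lambda>n. y n - b n) c = 0)"
    obtain q1 q2 q3 where bq: "b = C3 q1 q2 q3" using b unfolding model_eq by blast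
    have z: "h2_inner (\<lambda>n. y n - b n) (C3 r1 r2 r3) = 0" for r1 r2 r3
      using b C3_in_model by blast
    have "h2_inner (\<lambda>n. y n - b n) (C3 r1 r2 r3) = h2_inner y (C3 r1 r2 r3) - h2_inner b (C3 r1 r2 r3)" for r1 r2 r3
      by (rule inner_diff_left) (use y bq in simp_all)
    then have "h2_inner y (C3 r1 r2 r3) = h2_inner b (C3 r1 r2 r3)" for r1 r2 r3 using z by simp
    from this[of 1 0 0] this[of 0 1 0] this[of 0 0 1]
    have "q1 = h2_inner y (e1 a)" "q2 = h2_inner y (e2 a)" "q3 = h2_inner y (e3 a)"
      unfolding bq C3_inner C3_right[OF y] by simp_all
    then show "b = b0" unfolding bq b0_def by simp
  qed
qed

lemma cs_inner: "h2_inner (compressed_shift (phi a) (C3 p1 p2 p3)) (C3 p1 p2 p3)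
   = a * (p1 * cnj p1 + p2 * cnj p2 + p3 * cnj p3) + cc a * (p1 * cnj p2 + p2 * cnj p3) - cnj a * cc a * p1 * cnj p3"
proof -
  define y where "y = shift (C3 p1 p2 p3)"
  have y: "y \<in> H2" unfolding y_def by auto
  have "h2_inner (compressed_shift (phi a) (C3 p1 p2 p3)) (C3 p1 p2 p3) = h2_inner y (C3 p1 p2 p3)"
    unfolding compressed_shift_def y_def[symmetric] proj_eq[OF y] C3_inner C3_right[OF y]
    by (simp add: algebra_simps)
  also have "\<dots> = a * (p1 * cnj p1 + p2 * cnj p2 + p3 * cnj p3) + cc a * (p1 * cnj p2 + p2 * cnj p3) - cnj a * cc a * p1 * cnj p3"
    unfolding y_def C3_shift_inner by (simp add: algebra_simps)
  finally show ?thesis .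
qed

lemma C3_norm: "h2_norm (C3 p1 p2 p3) = sqrt ((cmod p1)^2 + (cmod p2)^2 + (cmod p3)^2)"
proof -
  have "complex_of_real ((h2_norm (C3 p1 p2 p3))^2) = p1 * cnj p1 + p2 * cnj p2 + p3 * cnj p3"
    using inner_self[OF C3_H2, of p1 p2 p3] C3_inner by simp
  also have "\<dots> = complex_of_real ((cmod p1)^2 + (cmod p2)^2 + (cmod p3)^2)"
    by (simp only: complex_norm_square of_real_add)
  finally have "(h2_norm (C3 p1 p2 p3))^2 = (cmod p1)^2 + (cmod p2)^2 + (cmod p3)^2"
    by (simp only: of_real_eq_iff)
  moreover have "h2_norm (C3 p1 p2 p3) \<ge> 0"
  proof -
    have "summable (\<lambda>n. (cmod (C3 p1 p2 p3 n))^2)" using C3_H2 unfolding H2_iff by blast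
    then have "(\<Sum>n. (cmod (C3 p1 p2 p3 n))^2) \<ge> 0" by (rule suminf_nonneg) simp
    then show ?thesis unfolding h2_norm_def by simp
  qed
  ultimately show ?thesis by (metis real_sqrt_unique)
qed

end


lemma qf2:
  fixes s1 s2 s12 y z :: real
  assumes "s1 \<ge> 0" "s2 \<ge> 0" "s1* s2 - s12^2 \<ge> 0"
  shows "s1*y^2 + 2* s12*y*z + s2*z^2 \<ge> 0"
proof (cases "s1 = 0")
  case True
  then have "s12^2 \<le> 0" using assms(3) by simp
  then have "s12 = 0" by (metis power2_less_eq_zero_iff)
  then show ?thesis using True assms(2) by simp
next
  case False
  then have s1: "s1 > 0" using assms(1) by simp
  have "s1 * (s1*y^2 + 2* s12*y*z + s2*z^2) = (s1*y + s12*z)^2 + (s1* s2 - s12^2)*z^2"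
    by (simp add: power2_eq_square algebra_simps)
  also have "\<dots> \<ge> 0" using assms(3) by simp
  finally show ?thesis using s1 by (simp add: zero_le_mult_iff)
qed

lemma qf3:
  fixes a b d e f g x y z :: real
  assumes "a > 0" "a*b - e^2 \<ge> 0" "a*d - g^2 \<ge> 0"
    "a*b*d + 2*e*f*g - a*f^2 - b*g^2 - d*e^2 \<ge> 0"
  shows "a*x^2 + b*y^2 + d*z^2 + 2*e*x*y + 2*g*x*z + 2*f*y*z \<ge> 0"
proof -
  have id: "(a*b - e^2)*(a*d - g^2) - (a*f - e*g)^2 = a*(a*b*d + 2*e*f*g - a*f^2 - b*g^2 - d*e^2)"
    by (simp add: power2_eq_square algebra_simps)
  have h2: "(a*b - e^2)*y^2 + 2*(a*f - e*g)*y*z + (a*d - g^2)*z^2 \<ge> 0"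
    by (rule qf2) (use assms id in auto)
  have "a * (a*x^2 + b*y^2 + d*z^2 + 2*e*x*y + 2*g*x*z + 2*f*y*z)
     = (a*x + e*y + g*z)^2 + ((a*b - e^2)*y^2 + 2*(a*f - e*g)*y*z + (a*d - g^2)*z^2)"
    by (simp add: power2_eq_square algebra_simps)
  also have "\<dots> \<ge> 0" using h2 by simp
  finally show ?thesis using assms(1) by (simp add: zero_le_mult_iff)
qed

lemma det_id:
  fixes r l u S :: real
  assumes "l^2 + r*l = 2" "S^2 = 2*u - u^2"
  defines "c \<equiv> 1 - r^2" and "C \<equiv> 1 - u"
  defines "D \<equiv> r*u + c*l/2"
  shows "(2*D + c*C*r)*(4*D)*(2*D - c*C*r) + 2*(-2*c*C)*(2*c*S)*(-c*S*r) - (2*D + c*C*r)*(2*c*S)^2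
     - (4*D)*(-c*S*r)^2 - (2*D - c*C*r)*(-2*c*C)^2
     = 2*(c^2*(2*r*u)*(3*l^2-3) + 3*c*l*(2*r*u)^2 + (2*r*u)^3)"
proof -
  have "(2*D + c*C*r)*(4*D)*(2*D - c*C*r) + 2*(-2*c*C)*(2*c*S)*(-c*S*r) - (2*D + c*C*r)*(2*c*S)^2
     - (4*D)*(-c*S*r)^2 - (2*D - c*C*r)*(-2*c*C)^2
     - 2*(c^2*(2*r*u)*(3*l^2-3) + 3*c*l*(2*r*u)^2 + (2*r*u)^3)
   = (S^2-2*u+u^2)*(- 4*l + 10*l*r^2 - 6*l*r^4 - 2*l*r^6 + 2*l*r^8 + 4*r - 12*r*u - 12*r^3 + 24*r^3*u + 12*r^5 - 12*r^5*u - 4*r^7)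
     + (l^2+r*l-2)*(2*l - 6*l*r^2 + 6*l*r^4 - 2*l*r^6 - 2*r + 6*r^3 - 6*r^5 + 2*r^7)"
    unfolding D_def c_def C_def by algebra
  then show ?thesis using assms(1,2) by simp
qed


lemma l_facts:
  fixes r :: real
  assumes "0 \<le> r" "r < 1"
  defines "l \<equiv> (sqrt (r^2+8) - r)/2"
  shows "l^2 + r*l = 2" "l \<ge> 1"
proof -
  have s2: "(sqrt (r^2+8))^2 = r^2+8" by simp
  show "l^2 + r*l = 2" unfolding l_def using s2 by (simp add: power2_eq_square field_simps)
  have "(r+2)^2 \<le> r^2 + 8" using assms by (simp add: power2_eq_square algebra_simps)
  then have "r + 2 \<le> sqrt (r^2+8)" using assms(1) by (simp add: real_le_rsqrt)
  then show "l \<ge> 1" unfolding l_def by simp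
qed

lemma minor1_id:
  fixes r l u :: real
  assumes "l^2 + r*l = 2"
  shows "((1-r^2)*l + 2*r*u)*((1-r^2)*l + 2*r*u + (1-r^2)*(1-u)*r) - 2*(1-r^2)^2*(1-u)^2
     = u*((2*r*(1-r^2)*(l+r)+((1-r^2)*l)*(2*r-(1-r^2)*r)+4*(1-r^2)^2) + (2*(r^2*(2-(1-r^2))-(1-r^2)^2))*u)"
proof -
  have "((1-r^2)*l + 2*r*u)*((1-r^2)*l + 2*r*u + (1-r^2)*(1-u)*r) - 2*(1-r^2)^2*(1-u)^2
     - u*((2*r*(1-r^2)*(l+r)+((1-r^2)*l)*(2*r-(1-r^2)*r)+4*(1-r^2)^2) + (2*(r^2*(2-(1-r^2))-(1-r^2)^2))*u)
    = (l^2+r*l-2)*(1 - 2*r^2 + r^4)"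
    by algebra
  then show ?thesis using assms by simp
qed
lemma key_real:
  fixes r C S xp xq xt :: real
  assumes r0: "0 \<le> r" and r1: "r < 1" and CS: "C^2 + S^2 = 1"
  defines "l \<equiv> (sqrt (r^2+8) - r)/2"
  defines "c \<equiv> 1 - r^2"
  defines "D \<equiv> r*(1-C) + c*l/2"
  shows "0 \<le> (2*D + c*C*r)*xp^2 + (4*D)*xq^2 + (2*D - c*C*r)*xt^2 + 2*(-2*c*C)*xp*xq
          + 2*(-c*S*r)*xp*xt + 2*(2*c*S)*xq*xt"
proof -
  define u where "u = 1 - C"
  have lrel: "l^2 + r*l = 2" and l1: "l \<ge> 1" using l_facts[OF r0 r1] unfolding l_def by auto
  have "r^2 < 1^2" by (rule power_strict_mono) (use r0 r1 in auto)
  then have c0: "c > 0" unfolding c_def by simp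
  have c1: "c \<le> 1" unfolding c_def by simp
  have "C^2 \<le> 1" using CS by (smt (verit) zero_le_power2)
  then have "\<bar>C\<bar> \<le> 1" by (simp add: abs_square_le_1)
  then have u0: "u \<ge> 0" and u2: "u \<le> 2" unfolding u_def by auto
  have C_eq: "C = 1 - u" unfolding u_def by simp
  have S2: "S^2 = 2*u - u^2" using CS unfolding C_eq by (simp add: power2_eq_square algebra_simps)
  have D_eq: "D = r*u + c*l/2" unfolding D_def u_def by simp
  have rc: "r \<le> 1" "c*r \<le> c" using r1 c0 by auto
  have two_c: "2 - c \<ge> 0" using c1 by simp
  have a_eq: "2*D + c*C*r = c*l + c*r + u*r*(2-c)"
    unfolding D_eq C_eq by (simp add: algebra_simps)
  have apos: "2*D + c*C*r > 0"
  proof -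
    have "c*l > 0" using c0 l1 by simp
    moreover have "c*r \<ge> 0" using c0 r0 by simp
    moreover have "u*r*(2-c) \<ge> 0" using u0 r0 two_c by simp
    ultimately show ?thesis unfolding a_eq by linarith
  qed
  define lin where "lin = 2*r*c*(l+r)+(c*l)*(2*r-c*r)+4*c^2"
  define quad where "quad = 2*(r^2*(2-c)-c^2)"
  have m1: "(c*l + 2*r*u)*(c*l + 2*r*u + c*C*r) - 2*c^2*C^2 = u*(lin + quad*u)"
    unfolding lin_def quad_def C_eq c_def using minor1_id[OF lrel] by simp
  have lin0: "lin \<ge> 0"
  proof -
    have "2*r - c*r = r*(2-c)" by (simp add: algebra_simps)
    then have "(c*l)*(2*r-c*r) \<ge> 0" using c0 l1 r0 two_c by simp
    moreover have "2*r*c*(l+r) \<ge> 0" using c0 l1 r0 by simp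
    moreover have "4*c^2 \<ge> 0" by simp
    ultimately show ?thesis unfolding lin_def by linarith
  qed
  have lin2: "lin + 2*quad \<ge> 0"
  proof -
    have e: "lin + 2*quad = 2*r*c*(l+r) + c*l*r*(2-c) + 4*r^2*(2-c)"
      unfolding lin_def quad_def by algebra
    have "c*l*r*(2-c) \<ge> 0" using c0 l1 r0 two_c by simp
    moreover have "2*r*c*(l+r) \<ge> 0" using c0 l1 r0 by simp
    moreover have "4*r^2*(2-c) \<ge> 0" using two_c by simp
    ultimately show ?thesis unfolding e by linarith
  qed
  have "lin + quad*u = lin*(1 - u/2) + (lin + 2*quad)*(u/2)" by (simp add: algebra_simps)
  moreover have "lin*(1 - u/2) \<ge> 0" using lin0 u2 by simp
  moreover have "(lin + 2*quad)*(u/2) \<ge> 0" using lin2 u0 by simp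
  ultimately have "lin + quad*u \<ge> 0" by linarith
  then have "u*(lin + quad*u) \<ge> 0" using u0 by simp
  moreover have "(2*D + c*C*r)*(4*D) - (-2*c*C)^2 = 2*((c*l + 2*r*u)*(c*l + 2*r*u + c*C*r) - 2*c^2*C^2)"
    unfolding D_eq by algebra
  ultimately have minor1: "(2*D + c*C*r)*(4*D) - (-2*c*C)^2 \<ge> 0"
    using m1 by simp
  have "(2*D + c*C*r)*(2*D - c*C*r) - (-c*S*r)^2 = (2*D)^2 - (c*r)^2*(C^2+S^2)"
    by algebra
  then have "(2*D + c*C*r)*(2*D - c*C*r) - (-c*S*r)^2 = (2*D)^2 - (c*r)^2"
    using CS by simp
  moreover have "c*r \<le> 2*D"
  proof -
    have "2*D = c*l + 2*r*u" unfolding D_eq by simp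
    moreover have "c*l \<ge> c" using c0 l1 by simp
    moreover have "2*r*u \<ge> 0" using r0 u0 by simp
    ultimately show ?thesis using rc by linarith
  qed
  moreover have "c*r \<ge> 0" using c0 r0 by simp
  ultimately have minor2: "(2*D + c*C*r)*(2*D - c*C*r) - (-c*S*r)^2 \<ge> 0"
    using power_mono[of "c*r" "2*D" 2] by simp
  have det: "(2*D + c*C*r)*(4*D)*(2*D - c*C*r) + 2*(-2*c*C)*(2*c*S)*(-c*S*r) - (2*D + c*C*r)*(2*c*S)^2
     - (4*D)*(-c*S*r)^2 - (2*D - c*C*r)*(-2*c*C)^2 \<ge> 0"
  proof -
    have eq: "(2*D + c*C*r)*(4*D)*(2*D - c*C*r) + 2*(-2*c*C)*(2*c*S)*(-c*S*r) - (2*D + c*C*r)*(2*c*S)^2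
     - (4*D)*(-c*S*r)^2 - (2*D - c*C*r)*(-2*c*C)^2
     = 2*(c^2*(2*r*u)*(3*l^2-3) + 3*c*l*(2*r*u)^2 + (2*r*u)^3)"
      using det_id[OF lrel S2] unfolding D_eq C_eq c_def by simp
    moreover have "3*l^2 - 3 \<ge> 0" using l1 by (simp add: one_le_power)
    moreover have ru: "2*r*u \<ge> 0" using r0 u0 by simp
    ultimately have "c^2*(2*r*u)*(3*l^2-3) \<ge> 0" "3*c*l*(2*r*u)^2 \<ge> 0" "(2*r*u)^3 \<ge> 0"
      using c0 l1 by auto
    then have "0 \<le> 2*(c^2*(2*r*u)*(3*l^2-3) + 3*c*l*(2*r*u)^2 + (2*r*u)^3)" by simp
    then show ?thesis unfolding eq .
  qed
  show ?thesis
    by (rule qf3[OF apos minor1 minor2 det])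
qed


lemma key_identity:
  fixes r c D :: real and y1 y2 y3 w :: complex
  defines "C \<equiv> Re w" and "S \<equiv> Im w"
  defines "n \<equiv> cmod y1^2 + cmod y2^2 + cmod y3^2"
  defines "P \<equiv> y1*cnj y2 + y2*cnj y3 - of_real r * y1 * cnj y3"
  defines "F \<equiv> (\<lambda>xp xq xt. (2*D + c*C*r)*xp^2 + (4*D)*xq^2 + (2*D - c*C*r)*xt^2 + 2*(-2*c*C)*xp*xq
          + 2*(-c*S*r)*xp*xt + 2*(2*c*S)*xq*xt)"
  shows "4*((D + r*C)*n - Re (w * (of_real r * of_real n + of_real c * P)))
     = F (Re y1 + Re y3) (Re y2) (Im y1 - Im y3) + F (Im y1 + Im y3) (Im y2) (Re y3 - Re y1)"
  unfolding F_def C_def S_def n_def P_def cmod_power2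
  by (simp add: algebra_simps power2_eq_square)

lemma key_complex:
  fixes r :: real and y1 y2 y3 w :: complex
  assumes r0: "0 \<le> r" and r1: "r < 1" and w1: "cmod w = 1"
  shows "Re (w * (of_real r * of_real (cmod y1^2 + cmod y2^2 + cmod y3^2)
            + of_real (1 - r^2) * (y1*cnj y2 + y2*cnj y3 - of_real r * y1 * cnj y3)))
        \<le> (r + (1 - r^2)*((sqrt (r^2+8) - r)/2)/2) * (cmod y1^2 + cmod y2^2 + cmod y3^2)"
proof -
  define l where "l = (sqrt (r^2+8) - r)/2"
  define c where "c = 1 - r^2"
  define C where "C = Re w"
  define S where "S = Im w"
  define D where "D = r*(1-C) + c*l/2"
  define n where "n = cmod y1^2 + cmod y2^2 + cmod y3^2"
  define P where "P = y1*cnj y2 + y2*cnj y3 - of_real r * y1 * cnj y3"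
  have CS: "C^2 + S^2 = 1" using w1 unfolding C_def S_def by (simp add: cmod_power2[symmetric])
  define F where "F = (\<lambda>xp xq xt. (2*D + c*C*r)*xp^2 + (4*D)*xq^2 + (2*D - c*C*r)*xt^2 + 2*(-2*c*C)*xp*xq
          + 2*(-c*S*r)*xp*xt + 2*(2*c*S)*xq*xt)"
  have F0: "F xp xq xt \<ge> 0" for xp xq xt
    using key_real[OF r0 r1 CS, of xp xq xt] unfolding F_def D_def l_def c_def by simp
  have id: "4*((D + r*C)*n - Re (w * (of_real r * of_real n + of_real c * P)))
     = F (Re y1 + Re y3) (Re y2) (Im y1 - Im y3) + F (Im y1 + Im y3) (Im y2) (Re y3 - Re y1)"
    unfolding F_def C_def S_def n_def P_def by (rule key_identity)
  have "D + r*C = r + c*l/2" unfolding D_def by (simp add: algebra_simps)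
  then have "4*((r + c*l/2)*n - Re (w * (of_real r * of_real n + of_real c * P))) \<ge> 0"
    using id F0[of "Re y1 + Re y3" "Re y2" "Im y1 - Im y3"] F0[of "Im y1 + Im y3" "Im y2" "Re y3 - Re y1"]
    by simp
  then show ?thesis unfolding l_def c_def n_def P_def by simp
qed


lemma W_formula:
  fixes r :: real
  assumes "0 \<le> r"
  shows "r + (1 - r^2)*((sqrt (r^2+8) - r)/2)/2
       = (7 * r - r ^ 3 + (1 + r ^ 2) * sqrt (r ^ 2 + 8)) / (4 + 2 * r ^ 2 + 2 * r * sqrt (r ^ 2 + 8))"
proof -
  define s where "s = sqrt (r^2+8)"
  have s2: "s^2 = r^2 + 8" unfolding s_def by simp
  have s0: "s \<ge> 0" unfolding s_def by simp
  have den: "4 + 2 * r ^ 2 + 2 * r * s > 0" using assms s0 by (simp add: add_pos_nonneg)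
  have "(r + (1 - r^2)*((s - r)/2)/2) * (4 + 2 * r ^ 2 + 2 * r * s) - (7 * r - r ^ 3 + (1 + r ^ 2) * s)
     = (s^2 - r^2 - 8) * (2*r - 2*r^3) / 4"
    by (simp add: field_simps power2_eq_square power3_eq_cube)
  then have "(r + (1 - r^2)*((s - r)/2)/2) * (4 + 2 * r ^ 2 + 2 * r * s) = 7 * r - r ^ 3 + (1 + r ^ 2) * s"
    using s2 by simp
  then show ?thesis unfolding s_def[symmetric] using den by (simp add: field_simps)
qed

lemma Q_rot:
  fixes r :: real and p1 p2 p3 w al :: complex
  assumes w: "w * cnj w = 1" and al: "al = of_real r * w"
  defines "y1 \<equiv> p1 * w" and "y2 \<equiv> p2 * w^2" and "y3 \<equiv> p3 * w^3"
  shows "al * (p1 * cnj p1 + p2 * cnj p2 + p3 * cnj p3) + of_real (1 - r^2) * (p1 * cnj p2 + p2 * cnj p3)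
          - cnj al * of_real (1 - r^2) * p1 * cnj p3
       = w * (of_real r * (p1 * cnj p1 + p2 * cnj p2 + p3 * cnj p3)
           + of_real (1 - r^2) * (y1 * cnj y2 + y2 * cnj y3 - of_real r * y1 * cnj y3))"
proof -
  show ?thesis unfolding y1_def y2_def y3_def al
    by (simp only: complex_cnj_mult complex_cnj_power complex_cnj_complex_of_real complex_cnj_diff complex_cnj_add)
      (use w in algebra)
qed


definition Qx :: "complex \<Rightarrow> complex \<Rightarrow> complex \<Rightarrow> complex \<Rightarrow> complex" where
  "Qx al p1 p2 p3 = al * (p1 * cnj p1 + p2 * cnj p2 + p3 * cnj p3) + cc al * (p1 * cnj p2 + p2 * cnj p3)
      - cnj al * cc al * p1 * cnj p3"

definition Wv :: "real \<Rightarrow> real" where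
  "Wv r = r + (1 - r^2)*((sqrt (r^2+8) - r)/2)/2"

lemma unit_dir:
  fixes al :: complex
  obtains w where "w * cnj w = 1" "al = of_real (cmod al) * w"
proof (cases "al = 0")
  case True
  then show ?thesis using that[of 1] by simp
next
  case False
  define w where "w = al / of_real (cmod al)"
  have "cmod w = 1" using False by (simp add: w_def norm_divide)
  then have "w * cnj w = 1" by (metis complex_norm_square mult.commute norm_one of_real_1 one_power2)
  moreover have "al = of_real (cmod al) * w" using False by (simp add: w_def)
  ultimately show ?thesis by (rule that)
qed

lemma Wv_nonneg: "0 \<le> r \<Longrightarrow> r < 1 \<Longrightarrow> 0 \<le> Wv r"
proof -
  assume r: "0 \<le> r" "r < 1"
  have "l \<ge> 1" if "l = (sqrt (r^2+8) - r)/2" for l using l_facts[OF r] that by simp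
  then have "(sqrt (r^2+8) - r)/2 \<ge> 0" by fastforce
  moreover have "1 - r^2 \<ge> 0" using r by (simp add: abs_square_le_1)
  ultimately show ?thesis unfolding Wv_def using r by simp
qed

lemma Qx_bound:
  assumes a: "cmod al < 1" and p: "(cmod p1)^2 + (cmod p2)^2 + (cmod p3)^2 = 1"
  shows "cmod (Qx al p1 p2 p3) \<le> Wv (cmod al)"
proof -
  define r where "r = cmod al"
  have r0: "0 \<le> r" and r1: "r < 1" using a by (auto simp: r_def)
  obtain w where w: "w * cnj w = 1" and alw: "al = of_real r * w" using unit_dir[of al] unfolding r_def by blast
  have ccal: "cc al = of_real (1 - r^2)" by (simp add: cc_def r_def)
  define y1 where "y1 = p1 * w"
  define y2 where "y2 = p2 * w^2"
  define y3 where "y3 = p3 * w^3"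
  have cw: "cmod w = 1"
  proof -
    have "complex_of_real ((cmod w)^2) = 1" by (metis complex_norm_square w)
    then have "(cmod w)^2 = 1" by (metis of_real_eq_1_iff)
    from real_sqrt_unique[OF this norm_ge_zero] show ?thesis by simp
  qed
  have ny: "(cmod y1)^2 + (cmod y2)^2 + (cmod y3)^2 = 1"
    using p by (simp add: y1_def y2_def y3_def norm_mult norm_power cw)
  have sp: "p1 * cnj p1 + p2 * cnj p2 + p3 * cnj p3 = 1"
  proof -
    have "p1 * cnj p1 + p2 * cnj p2 + p3 * cnj p3 = complex_of_real ((cmod p1)^2 + (cmod p2)^2 + (cmod p3)^2)"
      by (simp only: complex_norm_square of_real_add)
    then show ?thesis using p by simp
  qed
  define Z where "Z = of_real r * (p1 * cnj p1 + p2 * cnj p2 + p3 * cnj p3)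
           + of_real (1 - r^2) * (y1 * cnj y2 + y2 * cnj y3 - of_real r * y1 * cnj y3)"
  have QZ: "Qx al p1 p2 p3 = w * Z"
    unfolding Qx_def ccal Z_def y1_def y2_def y3_def by (rule Q_rot[OF w alw])
  have cQ: "cmod (Qx al p1 p2 p3) = cmod Z" unfolding QZ by (simp add: norm_mult cw)
  have Z2: "Z = of_real r * of_real ((cmod y1)^2 + (cmod y2)^2 + (cmod y3)^2)
           + of_real (1 - r^2) * (y1 * cnj y2 + y2 * cnj y3 - of_real r * y1 * cnj y3)"
    unfolding Z_def sp ny by simp
  have "cmod Z \<le> Wv r"
  proof (cases "Z = 0")
    case True
    then show ?thesis using Wv_nonneg[OF r0 r1] by simp
  next
    case False
    define v where "v = cnj Z / of_real (cmod Z)"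
    have cv: "cmod v = 1" using False by (simp add: v_def norm_divide)
    have "Re (v * Z) = cmod Z"
    proof -
      have zz: "Z * cnj Z = complex_of_real ((cmod Z)^2)" by (rule complex_norm_square[symmetric])
      have "v * Z = (Z * cnj Z) / of_real (cmod Z)"
        unfolding v_def by (simp add: mult.commute)
      also have "\<dots> = of_real ((cmod Z)^2 / cmod Z)" unfolding zz by simp
      also have "(cmod Z)^2 / cmod Z = cmod Z" using False by (simp add: power2_eq_square)
      finally show ?thesis by simp
    qed
    moreover have "Re (v * Z) \<le> Wv r"
      using key_complex[OF r0 r1 cv, of y1 y2 y3] unfolding ny by (simp add: Z_def sp Wv_def)
    ultimately show ?thesis by simp
  qed
  then show ?thesis unfolding cQ r_def .
qed

lemma Qx_attain:
  assumes a: "cmod al < 1"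
  shows "\<exists>p1 p2 p3. (cmod p1)^2 + (cmod p2)^2 + (cmod p3)^2 = 1 \<and> cmod (Qx al p1 p2 p3) = Wv (cmod al)"
proof -
  define r where "r = cmod al"
  have r0: "0 \<le> r" and r1: "r < 1" using a by (auto simp: r_def)
  obtain w where w: "w * cnj w = 1" and alw: "al = of_real r * w" using unit_dir[of al] unfolding r_def by blast
  have ccal: "cc al = of_real (1 - r^2)" by (simp add: cc_def r_def)
  define l where "l = (sqrt (r^2+8) - r)/2"
  have lrel: "l^2 + r*l = 2" and l1: "l \<ge> 1" using l_facts[OF r0 r1] unfolding l_def by auto
  define N where "N = sqrt (2*l^2 + 4)"
  have N4: "2*l^2 + 4 > 0" using zero_le_power2[of l] by linarith
  then have N0: "N > 0" unfolding N_def by simp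
  have N2: "N^2 = 2*l^2 + 4" unfolding N_def by (simp add: add_nonneg_nonneg)
  define t1 where "t1 = l / N"
  define t2 where "t2 = 2 / N"
  define t3 where "t3 = l / N"
  define p1 where "p1 = of_real t1 * cnj w"
  define p2 where "p2 = of_real t2 * cnj w ^ 2"
  define p3 where "p3 = of_real t3 * cnj w ^ 3"
  have cw: "cmod w = 1"
  proof -
    have "complex_of_real ((cmod w)^2) = 1" by (metis complex_norm_square w)
    then have "(cmod w)^2 = 1" by (metis of_real_eq_1_iff)
    from real_sqrt_unique[OF this norm_ge_zero] show ?thesis by simp
  qed
  have "t1^2 + t2^2 + t3^2 = (l^2 + 4 + l^2) / N^2"
    unfolding t1_def t2_def t3_def by (simp add: power_divide add_divide_distrib)
  also have "\<dots> = 1" unfolding N2 using N4 by simp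
  finally have tsum: "t1^2 + t2^2 + t3^2 = 1" .
  have p: "(cmod p1)^2 + (cmod p2)^2 + (cmod p3)^2 = 1"
    using tsum by (simp add: p1_def p2_def p3_def norm_mult norm_power cw)
  have y1: "p1 * w = of_real t1" unfolding p1_def using w by (simp add: mult.assoc mult.commute[of "cnj w"])
  have y2: "p2 * w^2 = of_real t2"
    unfolding p2_def using w by (simp add: power2_eq_square algebra_simps)
      (metis mult.assoc mult.commute mult.right_neutral)
  have y3: "p3 * w^3 = of_real t3"
  proof -
    have "p3 * w^3 = of_real t3 * (w * cnj w)^3" unfolding p3_def by (simp add: power_mult_distrib algebra_simps)
    then show ?thesis using w by simp
  qed
  have sp: "p1 * cnj p1 + p2 * cnj p2 + p3 * cnj p3 = 1"
  proof -
    have "p1 * cnj p1 + p2 * cnj p2 + p3 * cnj p3 = complex_of_real ((cmod p1)^2 + (cmod p2)^2 + (cmod p3)^2)"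
      by (simp only: complex_norm_square of_real_add)
    then show ?thesis using p by simp
  qed
  have "Qx al p1 p2 p3 = w * (of_real r * (p1 * cnj p1 + p2 * cnj p2 + p3 * cnj p3)
           + of_real (1 - r^2) * ((p1 * w) * cnj (p2 * w^2) + (p2 * w^2) * cnj (p3 * w^3) - of_real r * (p1 * w) * cnj (p3 * w^3)))"
    unfolding Qx_def ccal by (rule Q_rot[OF w alw])
  also have "\<dots> = w * of_real (r + (1 - r^2) * (t1 * t2 + t2 * t3 - r * t1 * t3))"
    unfolding sp y1 y2 y3 by simp
  finally have Q: "cmod (Qx al p1 p2 p3) = \<bar>r + (1 - r^2) * (t1 * t2 + t2 * t3 - r * t1 * t3)\<bar>"
    by (simp only: norm_mult cw norm_of_real mult_1_left)
  have "t1 * t2 + t2 * t3 - r * t1 * t3 = (4*l - r*l^2) / N^2"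
    unfolding t1_def t2_def t3_def using N0 by (simp add: field_simps power2_eq_square)
  also have "\<dots> = l / 2"
  proof -
    have "4*l - r*l^2 - (l^3 + 2*l) = - l * (l^2 + r*l - 2)" by algebra
    then have "4*l - r*l^2 = l^3 + 2*l" using lrel by simp
    moreover have e2: "l/2 * (2*l^2 + 4) = l^3 + 2*l" by (simp add: algebra_simps power2_eq_square power3_eq_cube)
    ultimately have "4*l - r*l^2 = l/2 * (2*l^2 + 4)" by (simp only: e2)
    then show ?thesis unfolding N2 using N4 by (simp add: field_simps)
  qed
  finally have "r + (1 - r^2) * (t1 * t2 + t2 * t3 - r * t1 * t3) = Wv r"
    unfolding Wv_def l_def by simp
  then have "cmod (Qx al p1 p2 p3) = Wv r" unfolding Q using Wv_nonneg[OF r0 r1] by simp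
  then show ?thesis using p unfolding r_def by blast
qed


theorem mainTheorem11:
  fixes \<alpha> :: complex and \<phi> :: "complex \<Rightarrow> complex"
  assumes "cmod \<alpha> < 1"
    and "\<phi> = (\<lambda>z. ((z - \<alpha>) / (1 - cnj \<alpha> * z)) ^ 3)"
  shows "numerical_radius (compressed_shift \<phi>) (model_space \<phi>) =
    (7 * cmod \<alpha> - cmod \<alpha> ^ 3 + (1 + cmod \<alpha> ^ 2) * sqrt (cmod \<alpha> ^ 2 + 8)) /
    (4 + 2 * cmod \<alpha> ^ 2 + 2 * cmod \<alpha> * sqrt (cmod \<alpha> ^ 2 + 8))"
proof -
  note a = assms(1)
  have phi_eq: "\<phi> = phi \<alpha>" using assms(2) by (simp add: phi_def fun_eq_iff)
  have setEq: "{cmod (h2_inner (compressed_shift \<phi> f) f) | f. f \<in> model_space \<phi> \<and> h2_norm f = 1}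
     = {cmod (Qx \<alpha> p1 p2 p3) | p1 p2 p3. (cmod p1)^2 + (cmod p2)^2 + (cmod p3)^2 = 1}"
  proof (rule set_eqI, rule iffI)
    fix x assume "x \<in> {cmod (h2_inner (compressed_shift \<phi> f) f) | f. f \<in> model_space \<phi> \<and> h2_norm f = 1}"
    then obtain f where f: "f \<in> model_space (phi \<alpha>)" "h2_norm f = 1"
      and x: "x = cmod (h2_inner (compressed_shift (phi \<alpha>) f) f)" unfolding phi_eq by blast
    obtain p1 p2 p3 where fp: "f = C3 \<alpha> p1 p2 p3" using f(1) unfolding model_eq[OF a] by blast
    have "(cmod p1)^2 + (cmod p2)^2 + (cmod p3)^2 = 1" using f(2) unfolding fp C3_norm[OF a] by simp
    moreover have "x = cmod (Qx \<alpha> p1 p2 p3)" unfolding x fp cs_inner[OF a] Qx_def ..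
    ultimately show "x \<in> {cmod (Qx \<alpha> p1 p2 p3) | p1 p2 p3. (cmod p1)^2 + (cmod p2)^2 + (cmod p3)^2 = 1}"
      by blast
  next
    fix x assume "x \<in> {cmod (Qx \<alpha> p1 p2 p3) | p1 p2 p3. (cmod p1)^2 + (cmod p2)^2 + (cmod p3)^2 = 1}"
    then obtain p1 p2 p3 where p: "(cmod p1)^2 + (cmod p2)^2 + (cmod p3)^2 = 1"
      and x: "x = cmod (Qx \<alpha> p1 p2 p3)" by blast
    have "C3 \<alpha> p1 p2 p3 \<in> model_space (phi \<alpha>)" by (rule C3_in_model[OF a])
    moreover have "h2_norm (C3 \<alpha> p1 p2 p3) = 1" unfolding C3_norm[OF a] p by simp
    moreover have "x = cmod (h2_inner (compressed_shift (phi \<alpha>) (C3 \<alpha> p1 p2 p3)) (C3 \<alpha> p1 p2 p3))"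
      unfolding x cs_inner[OF a] Qx_def ..
    ultimately show "x \<in> {cmod (h2_inner (compressed_shift \<phi> f) f) | f. f \<in> model_space \<phi> \<and> h2_norm f = 1}"
      unfolding phi_eq by blast
  qed
  have "Sup {cmod (Qx \<alpha> p1 p2 p3) | p1 p2 p3. (cmod p1)^2 + (cmod p2)^2 + (cmod p3)^2 = 1} = Wv (cmod \<alpha>)"
  proof (rule cSup_eq_maximum)
    show "Wv (cmod \<alpha>) \<in> {cmod (Qx \<alpha> p1 p2 p3) | p1 p2 p3. (cmod p1)^2 + (cmod p2)^2 + (cmod p3)^2 = 1}"
    proof -
      obtain p1 p2 p3 where h: "(cmod p1)^2 + (cmod p2)^2 + (cmod p3)^2 = 1"
        "cmod (Qx \<alpha> p1 p2 p3) = Wv (cmod \<alpha>)" using Qx_attain[OF a] by blast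
      show ?thesis unfolding mem_Collect_eq
        by (rule exI[of _ p1], rule exI[of _ p2], rule exI[of _ p3]) (use h in simp)
    qed
  next
    fix x assume "x \<in> {cmod (Qx \<alpha> p1 p2 p3) | p1 p2 p3. (cmod p1)^2 + (cmod p2)^2 + (cmod p3)^2 = 1}"
    then obtain p1 p2 p3 where h: "x = cmod (Qx \<alpha> p1 p2 p3)" "(cmod p1)^2 + (cmod p2)^2 + (cmod p3)^2 = 1"
      by blast
    show "x \<le> Wv (cmod \<alpha>)" unfolding h(1) by (rule Qx_bound[OF a h(2)])
  qed
  then have "numerical_radius (compressed_shift \<phi>) (model_space \<phi>) = Wv (cmod \<alpha>)"
    unfolding numerical_radius_def setEq .
  then show ?thesis unfolding Wv_def using W_formula[of "cmod \<alpha>"] by simp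
qed


end
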